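(* For all $m,n\in\mathbb N$, the set $\{\widehat{x}\mid x\text{ a Temperley–Lieb diagram }\mathbf m\to\mathbf n\}$ is a basis of $\mathrm{Hom}_{\mathcal{TL}_0(\Bbbk)}(\mathbf m,\mathbf n)$.
   Context: $\Bbbk$ is a field. $\mathcal{TL}_0(\Bbbk)$ is the strict $\Bbbk$-linear monoidal category with objects $\mathbf 0,\mathbf 1,\dots$, $\mathbf m\otimes\mathbf n=\mathbf{m+n}$, generated by $\mathrm{cup}:\mathbf 0\to\mathbf 2$ and $\mathrm{cap}:\mathbf 2\to\mathbf 0$ subject to $(\mathrm{id}_{\mathbf 1}\otimes\mathrm{cap})\circ(\mathrm{cup}\otimes\mathrm{id}_{\mathbf 1})=0=(\mathrm{cap}\otimes\mathrm{id}_{\mathbf 1})\circ(\mathrm{id}_{\mathbf 1}\otimes\mathrm{cup})$ and $\mathrm{cap}\circ\mathrm{cup}=\mathrm{id}_{\mathbf 0}$. A Temperley–Lieb diagram is a nonzero morphism built from cup, cap and identities by $\otimes,\circ$; a cup (resp. cap) diagram is one built from cup (resp. cap) and identities only. Every Temperley–Lieb diagram $x$ with $k$ through-strands factors uniquely as $x=u\circ v$ with $v:\mathbf m\to\mathbf k$ a cap diagram and $u:\mathbf k\to\mathbf n$ a cup diagram. The Jones–Wenzl projector is $\mathrm{j}_k=\sum_{I}(-1)^{|I|}\mathrm{cup}_{I,k}\circ\mathrm{cap}_{I,k}$, summing over $I\subseteq\{1,\dots,k\}$ with $k\notin I$ and no two consecutive elements, where $\mathrm{cap}_{I,k}$ has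 caps joining $i,i+1$ ($i\in I$) and through-strands elsewhere, and $\mathrm{cup}_{I,k}$ is its reflection. The max-summand morphism of $x=u\circ v$ is $\widehat{x}=u\circ\mathrm{j}_k\circ v$. *)

theory Defs
  imports Main
begin

text \<open>A morphism of the free strict monoidal category on cup : 0 -> 2 and cap : 2 -> 0 is a
word of layers (a, g) = id_a (x) g (x) id_b, read left to right in order of application
(first list element is applied first), modulo the interchange law. The k-linear category
has as Hom(m,n) the free k-vector space on words m -> n, modulo the subspace spanned by
the interchange law and the defining relations placed in arbitrary contexts.\<close>

datatype gen = Cup | Cap

type_synonym layer = "nat \<times> gen"
type_synonym word = "layer list"

fun ins :: "gen \<Rightarrow> nat" where
  "ins Cup = 0" | "ins Cap = 2"

fun outs :: "gen \<Rightarrow> nat" where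
  "outs Cup = 2" | "outs Cap = 0"

fun tgt :: "nat \<Rightarrow> word \<Rightarrow> nat option" where
  "tgt m [] = Some m"
| "tgt m ((a, Cup) # ws) = (if a \<le> m then tgt (m + 2) ws else None)"
| "tgt m ((a, Cap) # ws) = (if a + 2 \<le> m then tgt (m - 2) ws else None)"

definition typed :: "nat \<Rightarrow> nat \<Rightarrow> word \<Rightarrow> bool" where
  "typed m n w \<longleftrightarrow> tgt m w = Some n"

definition dlt :: "word \<Rightarrow> word \<Rightarrow> 'k::field" where
  "dlt w = (\<lambda>v. if v = w then 1 else 0)"

definition free_vec :: "nat \<Rightarrow> nat \<Rightarrow> (word \<Rightarrow> 'k::field) set" where
  "free_vec m n = {f. finite {w. f w \<noteq> 0} \<and> (\<forall>w. f w \<noteq> 0 \<longrightarrow> typed m n w)}"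

definition lin_comb :: "(word \<Rightarrow> 'k::field) set \<Rightarrow> ((word \<Rightarrow> 'k) \<Rightarrow> 'k) \<Rightarrow> (word \<Rightarrow> 'k)" where
  "lin_comb F c = (\<lambda>w. \<Sum>v\<in>F. c v * v w)"

definition lin_span :: "(word \<Rightarrow> 'k::field) set \<Rightarrow> (word \<Rightarrow> 'k) set" where
  "lin_span S = {f. \<exists>F c. finite F \<and> F \<subseteq> S \<and> f = lin_comb F c}"

text \<open>Generating vectors of the kernel: interchange law, cap o cup = id_0, and the two
zigzag relations = 0, each whiskered on both sides and composed with arbitrary words.\<close>
definition rel_vecs :: "nat \<Rightarrow> nat \<Rightarrow> (word \<Rightarrow> 'k::field) set" where
  "rel_vecs m n =
     {(\<lambda>w. dlt (w1 @ [(a, g), (c, h)] @ w2) w - dlt (w1 @ [(c + ins g - outs g, h), (a, g)] @ w2) w)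
       | w1 w2 a g c h. a + outs g \<le> c \<and> typed m n (w1 @ [(a, g), (c, h)] @ w2)}
   \<union> {(\<lambda>w. dlt (w1 @ [(a, Cup), (a, Cap)] @ w2) w - dlt (w1 @ w2) w)
       | w1 w2 a. typed m n (w1 @ [(a, Cup), (a, Cap)] @ w2)}
   \<union> {dlt (w1 @ [(a, Cup), (Suc a, Cap)] @ w2)
       | w1 w2 a. typed m n (w1 @ [(a, Cup), (Suc a, Cap)] @ w2)}
   \<union> {dlt (w1 @ [(Suc a, Cup), (a, Cap)] @ w2)
       | w1 w2 a. typed m n (w1 @ [(Suc a, Cup), (a, Cap)] @ w2)}"

definition tl_ideal :: "nat \<Rightarrow> nat \<Rightarrow> (word \<Rightarrow> 'k::field) set" where
  "tl_ideal m n = lin_span (rel_vecs m n)"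

definition tl_eq :: "nat \<Rightarrow> nat \<Rightarrow> (word \<Rightarrow> 'k::field) \<Rightarrow> (word \<Rightarrow> 'k) \<Rightarrow> bool" where
  "tl_eq m n f g \<longleftrightarrow> (\<lambda>w. f w - g w) \<in> tl_ideal m n"

definition cap_word :: "word \<Rightarrow> bool" where
  "cap_word w \<longleftrightarrow> (\<forall>l\<in>set w. snd l = Cap)"

definition cup_word :: "word \<Rightarrow> bool" where
  "cup_word w \<longleftrightarrow> (\<forall>l\<in>set w. snd l = Cup)"

definition adm :: "nat \<Rightarrow> nat set set" where
  "adm k = {I. I \<subseteq> {1..k} \<and> k \<notin> I \<and> (\<forall>i\<in>I. Suc i \<notin> I)}"

definition capI :: "nat set \<Rightarrow> word" where
  "capI I = map (\<lambda>i. (i - 1, Cap)) (rev (sorted_list_of_set I))"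

definition cupI :: "nat set \<Rightarrow> word" where
  "cupI I = map (\<lambda>i. (i - 1, Cup)) (sorted_list_of_set I)"

text \<open>u o j_k o v for a cap word v : m -> k and a cup word u : k -> n.\<close>
definition hat_vec :: "word \<Rightarrow> nat \<Rightarrow> word \<Rightarrow> (word \<Rightarrow> 'k::field)" where
  "hat_vec v k u = (\<lambda>w. \<Sum>I\<in>adm k. (- 1) ^ card I * dlt (v @ capI I @ cupI I @ u) w)"

text \<open>Representatives of the max-summand morphisms x-hat of all TL diagrams x : m -> n,
computed from the cap/cup factorisation x = u o v. A TL diagram is the class of a
single word w that is nonzero in Hom(m,n).\<close>
definition hat_set :: "nat \<Rightarrow> nat \<Rightarrow> (word \<Rightarrow> 'k::field) set" where
  "hat_set m n = {hat_vec v k u | w v k u.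
      typed m n w \<and> \<not> tl_eq m n (dlt w) (\<lambda>_. 0 :: 'k) \<and> cap_word v \<and> cup_word u \<and> typed m k v \<and> typed k n u
      \<and> tl_eq m n (dlt w :: word \<Rightarrow> 'k) (dlt (v @ u))}"

definition basis_of_hom :: "nat \<Rightarrow> nat \<Rightarrow> (word \<Rightarrow> 'k::field) set \<Rightarrow> bool" where
  "basis_of_hom m n B \<longleftrightarrow>
     B \<subseteq> free_vec m n
   \<and> (\<forall>f\<in>free_vec m n. \<exists>F c. finite F \<and> F \<subseteq> B \<and> tl_eq m n f (lin_comb F c))
   \<and> (\<forall>F c. finite F \<and> F \<subseteq> B \<and> (\<forall>h\<in>F. \<forall>h'\<in>F. h \<noteq> h' \<longrightarrow> \<not> tl_eq m n h h')
        \<and> lin_comb F c \<in> tl_ideal m n \<longrightarrow> (\<forall>h\<in>F. c h = 0))"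

end

theory Submission
  imports Defs
begin

lemma lin_span_0: "(\<lambda>_. 0) \<in> lin_span S"
  unfolding lin_span_def lin_comb_def
  by (rule CollectI, rule exI[of _ "{}"], auto)

lemma lin_span_base: "s \<in> S \<Longrightarrow> s \<in> lin_span S"
  unfolding lin_span_def lin_comb_def
  by (rule CollectI, rule exI[of _ "{s}"], rule exI[of _ "\<lambda>_. 1"], auto)

lemma lin_comb_insert:
  "finite F \<Longrightarrow> x \<notin> F \<Longrightarrow> lin_comb (insert x F) c = (\<lambda>w. lin_comb F c w + c x * x w)"
  unfolding lin_comb_def by (rule ext) (simp add: sum.insert add.commute)

lemma lin_span_induct[consumes 1]:
  assumes "f \<in> lin_span S" "P (\<lambda>_. 0)"
    "\<And>f s a. P f \<Longrightarrow> s \<in> S \<Longrightarrow> P (\<lambda>w. f w + a * s w)"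
  shows "P f"
proof -
  obtain F c where F: "finite F" "F \<subseteq> S" "f = lin_comb F c"
    using assms(1) unfolding lin_span_def by blast
  have "P (lin_comb F c)" using F(1,2)
  proof (induction F rule: finite_induct)
    case empty
    then show ?case using assms(2) by (simp add: lin_comb_def)
  next
    case (insert x F)
    then show ?case using assms(3) by (simp add: lin_comb_insert)
  qed
  then show ?thesis using F by simp
qed

lemma lin_span_add:
  assumes "f \<in> lin_span S" "g \<in> lin_span S"
  shows "(\<lambda>w. f w + g w) \<in> lin_span S"
  using assms(2)
proof (induction rule: lin_span_induct)
  case 1
  then show ?case using assms(1) by simp
next
  case (2 h s a)
  obtain F c where F: "finite F" "F \<subseteq> S" "(\<lambda>w. f w + h w) = lin_comb F c"
    using 2(1) unfolding lin_span_def by blast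
  show ?case
  proof (cases "s \<in> F")
    case True
    have "(\<lambda>w. f w + (h w + a * s w)) = lin_comb F (c(s := c s + a))"
    proof
      fix w
      have "lin_comb F (c(s := c s + a)) w = (\<Sum>v\<in>F. c v * v w) + a * s w"
      proof -
        have e1: "(\<Sum>v\<in>F. c v * v w) = c s * s w + (\<Sum>v\<in>F - {s}. c v * v w)"
          by (rule sum.remove[OF F(1) True])
        have e2: "(\<Sum>v\<in>F. (c(s := c s + a)) v * v w) = (c(s := c s + a)) s * s w + (\<Sum>v\<in>F - {s}. (c(s := c s + a)) v * v w)"
          by (rule sum.remove[OF F(1) True])
        have e3: "(\<Sum>v\<in>F - {s}. (c(s := c s + a)) v * v w) = (\<Sum>v\<in>F - {s}. c v * v w)"
          by (rule sum.cong) auto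
        show ?thesis unfolding lin_comb_def e2 e3 e1 by (simp add: distrib_right)
      qed
      also have "\<dots> = f w + (h w + a * s w)"
        using fun_cong[OF F(3), of w] by (simp add: lin_comb_def)
      finally show "f w + (h w + a * s w) = lin_comb F (c(s := c s + a)) w" by simp
    qed
    then show ?thesis using F 2 unfolding lin_span_def by blast
  next
    case False
    have "(\<lambda>w. f w + (h w + a * s w)) = lin_comb (insert s F) (c(s := a))"
    proof
      fix w
      have "lin_comb (insert s F) (c(s := a)) w = (\<Sum>v\<in>F. c v * v w) + a * s w"
        unfolding lin_comb_def
        using F(1) False
        by (simp add: add.commute) (rule sum.cong, auto)
      also have "\<dots> = f w + (h w + a * s w)"
        using fun_cong[OF F(3), of w] by (simp add: lin_comb_def)
      finally show "f w + (h w + a * s w) = lin_comb (insert s F) (c(s := a)) w" by simp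
    qed
    then show ?thesis using F 2 unfolding lin_span_def by blast
  qed
qed

lemma lin_span_smult:
  assumes "f \<in> lin_span S"
  shows "(\<lambda>w. a * f w) \<in> lin_span S"
proof -
  obtain F c where F: "finite F" "F \<subseteq> S" "f = lin_comb F c"
    using assms(1) unfolding lin_span_def by blast
  have "(\<lambda>w. a * f w) = lin_comb F (\<lambda>v. a * c v)"
    unfolding F(3) lin_comb_def by (rule ext) (simp add: sum_distrib_left mult.assoc)
  then show ?thesis using F unfolding lin_span_def by blast
qed

lemma lin_span_neg: "f \<in> lin_span S \<Longrightarrow> (\<lambda>w. - f w) \<in> lin_span S"
proof -
  assume "f \<in> lin_span S"
  from lin_span_smult[OF this, of "-1"] show ?thesis by simp
qed

lemma lin_span_diff: "f \<in> lin_span S \<Longrightarrow> g \<in> lin_span S \<Longrightarrow> (\<lambda>w. f w - g w) \<in> lin_span S"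
proof -
  assume a: "f \<in> lin_span S" "g \<in> lin_span S"
  from lin_span_add[OF a(1) lin_span_neg[OF a(2)]] show ?thesis by simp
qed

lemma lin_span_sum:
  "finite A \<Longrightarrow> (\<And>x. x \<in> A \<Longrightarrow> g x \<in> lin_span S) \<Longrightarrow> (\<lambda>w. \<Sum>x\<in>A. g x w) \<in> lin_span S"
proof (induction A rule: finite_induct)
  case empty
  then show ?case using lin_span_0 by simp
next
  case (insert x F)
  have "(\<lambda>w. g x w + (\<Sum>x\<in>F. g x w)) \<in> lin_span S"
    using insert by (intro lin_span_add) auto
  then show ?case using insert(1,2) by (simp add: sum.insert)
qed

lemma lin_span_cong: "f \<in> lin_span S \<Longrightarrow> (\<And>w. f w = g w) \<Longrightarrow> g \<in> lin_span S"
proof -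
  assume "f \<in> lin_span S" "\<And>w. f w = g w"
  then have "f = g" by auto
  then show ?thesis using \<open>f \<in> lin_span S\<close> by simp
qed

definition ctx :: "word \<Rightarrow> word \<Rightarrow> (word \<Rightarrow> 'k) \<Rightarrow> (word \<Rightarrow> 'k::field)" where
  "ctx p s f = (\<lambda>w. if length p + length s \<le> length w \<and> take (length p) w = p \<and> drop (length w - length s) w = s
     then f (drop (length p) (take (length w - length s) w)) else 0)"

lemma ctx_split:
  assumes "length p + length s \<le> length w" "take (length p) w = p" "drop (length w - length s) w = s"
  shows "w = p @ drop (length p) (take (length w - length s) w) @ s"
proof -
  have "take (length w - length s) w = take (length p) (take (length w - length s) w) @ drop (length p) (take (length w - length s) w)"
    by (rule append_take_drop_id[symmetric])
  also have "take (length p) (take (length w - length s) w) = p"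
    using assms by (simp add: min_def) linarith
  finally have "take (length w - length s) w = p @ drop (length p) (take (length w - length s) w)" .
  then show ?thesis using assms(3) append_take_drop_id[of "length w - length s" w] by (metis append.assoc)
qed

lemma ctx_dlt: "ctx p s (dlt x) = dlt (p @ x @ s)"
proof
  fix w
  show "ctx p s (dlt x) w = dlt (p @ x @ s) w"
  proof (cases "w = p @ x @ s")
    case True
    then show ?thesis by (simp add: ctx_def dlt_def)
  next
    case False
    then show ?thesis unfolding ctx_def dlt_def using ctx_split[of p s w] by auto
  qed
qed

lemma ctx_dlt': "ctx p s (dlt x) w = dlt (p @ x @ s) w"
  by (simp add: ctx_dlt)

lemma ctx_lin: "ctx p s (\<lambda>w. f w + a * g w) = (\<lambda>w. ctx p s f w + a * ctx p s g w)"
  by (auto simp: ctx_def)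

lemma ctx_diff: "ctx p s (\<lambda>w. f w - g w) = (\<lambda>w. ctx p s f w - ctx p s g w)"
  by (auto simp: ctx_def)

lemma ctx_zero: "ctx p s (\<lambda>_. 0) = (\<lambda>_. 0)"
  by (auto simp: ctx_def)

lemma tgt_append: "tgt m (x @ y) = (case tgt m x of None \<Rightarrow> None | Some k \<Rightarrow> tgt k y)"
  by (induction m x rule: tgt.induct) auto

lemma typed_append: "typed m k x \<Longrightarrow> typed k n y \<Longrightarrow> typed m n (x @ y)"
  by (simp add: typed_def tgt_append)

lemma typed_appendD: "typed m n (x @ y) \<Longrightarrow> \<exists>k. typed m k x \<and> typed k n y"
  by (auto simp: typed_def tgt_append split: option.splits)

lemma typed_ctx: "typed k k' x \<Longrightarrow> typed m k p \<Longrightarrow> typed k' n s \<Longrightarrow> typed m n (p @ x @ s)"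
  by (meson typed_append)

lemma rel_ctx:
  assumes "r \<in> rel_vecs k k'" "typed m k p" "typed k' n s"
  shows "ctx p s r \<in> (rel_vecs m n :: (word \<Rightarrow> 'k::field) set)"
  using assms(1)[unfolded rel_vecs_def]
proof (elim UnE)
  assume "r \<in> {(\<lambda>w. dlt (w1 @ [(a, g), (c, h)] @ w2) w - dlt (w1 @ [(c + ins g - outs g, h), (a, g)] @ w2) w) |
     w1 w2 a g c h. a + outs g \<le> c \<and> typed k k' (w1 @ [(a, g), (c, h)] @ w2)}"
  then obtain w1 w2 a g c h where r: "r = (\<lambda>w. dlt (w1 @ [(a, g), (c, h)] @ w2) w - dlt (w1 @ [(c + ins g - outs g, h), (a, g)] @ w2) w)"
    "a + outs g \<le> c" "typed k k' (w1 @ [(a, g), (c, h)] @ w2)" by blast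
  have "ctx p s r = (\<lambda>w. dlt ((p @ w1) @ [(a, g), (c, h)] @ (w2 @ s)) w - dlt ((p @ w1) @ [(c + ins g - outs g, h), (a, g)] @ (w2 @ s)) w)"
    unfolding r ctx_diff ctx_dlt' by simp
  moreover have "typed m n ((p @ w1) @ [(a, g), (c, h)] @ (w2 @ s))"
    using typed_ctx[OF r(3) assms(2,3)] by simp
  ultimately show ?thesis unfolding rel_vecs_def using r(2) by blast
next
  assume "r \<in> {(\<lambda>w. dlt (w1 @ [(a, Cup), (a, Cap)] @ w2) w - dlt (w1 @ w2) w) | w1 w2 a. typed k k' (w1 @ [(a, Cup), (a, Cap)] @ w2)}"
  then obtain w1 w2 a where r: "r = (\<lambda>w. dlt (w1 @ [(a, Cup), (a, Cap)] @ w2) w - dlt (w1 @ w2) w)"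
    "typed k k' (w1 @ [(a, Cup), (a, Cap)] @ w2)" by blast
  have "ctx p s r = (\<lambda>w. dlt ((p @ w1) @ [(a, Cup), (a, Cap)] @ (w2 @ s)) w - dlt ((p @ w1) @ (w2 @ s)) w)"
    unfolding r ctx_diff ctx_dlt' by simp
  moreover have "typed m n ((p @ w1) @ [(a, Cup), (a, Cap)] @ (w2 @ s))"
    using typed_ctx[OF r(2) assms(2,3)] by simp
  ultimately show ?thesis unfolding rel_vecs_def by blast
next
  assume "r \<in> {dlt (w1 @ [(a, Cup), (Suc a, Cap)] @ w2) | w1 w2 a. typed k k' (w1 @ [(a, Cup), (Suc a, Cap)] @ w2)}"
  then obtain w1 w2 a where r: "r = dlt (w1 @ [(a, Cup), (Suc a, Cap)] @ w2)"
    "typed k k' (w1 @ [(a, Cup), (Suc a, Cap)] @ w2)" by blast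
  have "ctx p s r = dlt ((p @ w1) @ [(a, Cup), (Suc a, Cap)] @ (w2 @ s))"
    unfolding r ctx_dlt by simp
  moreover have "typed m n ((p @ w1) @ [(a, Cup), (Suc a, Cap)] @ (w2 @ s))"
    using typed_ctx[OF r(2) assms(2,3)] by simp
  ultimately show ?thesis unfolding rel_vecs_def by blast
next
  assume "r \<in> {dlt (w1 @ [(Suc a, Cup), (a, Cap)] @ w2) | w1 w2 a. typed k k' (w1 @ [(Suc a, Cup), (a, Cap)] @ w2)}"
  then obtain w1 w2 a where r: "r = dlt (w1 @ [(Suc a, Cup), (a, Cap)] @ w2)"
    "typed k k' (w1 @ [(Suc a, Cup), (a, Cap)] @ w2)" by blast
  have "ctx p s r = dlt ((p @ w1) @ [(Suc a, Cup), (a, Cap)] @ (w2 @ s))"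
    unfolding r ctx_dlt by simp
  moreover have "typed m n ((p @ w1) @ [(Suc a, Cup), (a, Cap)] @ (w2 @ s))"
    using typed_ctx[OF r(2) assms(2,3)] by simp
  ultimately show ?thesis unfolding rel_vecs_def by blast
qed

lemma ideal_ctx:
  assumes "f \<in> tl_ideal k k'" "typed m k p" "typed k' n s"
  shows "ctx p s f \<in> (tl_ideal m n :: (word \<Rightarrow> 'k::field) set)"
  using assms(1) unfolding tl_ideal_def
proof (induction rule: lin_span_induct)
  case 1
  then show ?case by (simp add: ctx_zero lin_span_0)
next
  case (2 f r a)
  have "ctx p s r \<in> lin_span (rel_vecs m n)"
    by (rule lin_span_base, rule rel_ctx[OF 2(2) assms(2,3)])
  then show ?case unfolding ctx_lin using 2(1) by (intro lin_span_add lin_span_smult)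
qed

lemma tl_eq_refl: "tl_eq m n f f"
  unfolding tl_eq_def tl_ideal_def using lin_span_0 by simp

lemma tl_eq_sym: "tl_eq m n f g \<Longrightarrow> tl_eq m n g f"
  unfolding tl_eq_def tl_ideal_def using lin_span_neg by fastforce

lemma tl_eq_trans: "tl_eq m n f g \<Longrightarrow> tl_eq m n g h \<Longrightarrow> tl_eq m n f h"
  unfolding tl_eq_def tl_ideal_def using lin_span_add by fastforce

lemma tl_eq_ctx:
  assumes "tl_eq k k' f g" "typed m k p" "typed k' n s"
  shows "tl_eq m n (ctx p s f) (ctx p s g)"
  using ideal_ctx[OF assms(1)[unfolded tl_eq_def] assms(2,3)] unfolding tl_eq_def ctx_diff .

lemma tl_eq_ctx_dlt:
  assumes "tl_eq k k' (dlt x) (dlt y :: word \<Rightarrow> 'k::field)" "typed m k p" "typed k' n s"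
  shows "tl_eq m n (dlt (p @ x @ s) :: word \<Rightarrow> 'k) (dlt (p @ y @ s))"
  using tl_eq_ctx[OF assms] unfolding ctx_dlt .

lemma tl_eq_ctx_dlt0:
  assumes "tl_eq k k' (dlt x) (\<lambda>_. 0 :: 'k::field)" "typed m k p" "typed k' n s"
  shows "tl_eq m n (dlt (p @ x @ s) :: word \<Rightarrow> 'k) (\<lambda>_. 0)"
  using tl_eq_ctx[OF assms] unfolding ctx_dlt ctx_zero .

lemma tl_eq_add:
  "tl_eq m n f g \<Longrightarrow> tl_eq m n f' g' \<Longrightarrow> tl_eq m n (\<lambda>w. f w + a * f' w) (\<lambda>w. g w + a * g' w)"
proof -
  assume "tl_eq m n f g" "tl_eq m n f' g'"
  then have "(\<lambda>w. (f w - g w) + a * (f' w - g' w)) \<in> tl_ideal m n"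
    unfolding tl_eq_def tl_ideal_def by (intro lin_span_add lin_span_smult)
  then show ?thesis unfolding tl_eq_def by (simp add: algebra_simps)
qed

lemma tl_eq_sum:
  "finite A \<Longrightarrow> (\<And>x. x \<in> A \<Longrightarrow> tl_eq m n (f x) (g x)) \<Longrightarrow>
     tl_eq m n (\<lambda>w. \<Sum>x\<in>A. f x w) (\<lambda>w. \<Sum>x\<in>A. g x w)"
proof -
  assume a: "finite A" "\<And>x. x \<in> A \<Longrightarrow> tl_eq m n (f x) (g x)"
  have "(\<lambda>w. \<Sum>x\<in>A. f x w - g x w) \<in> tl_ideal m n"
    unfolding tl_ideal_def using a unfolding tl_eq_def tl_ideal_def by (intro lin_span_sum) auto
  then show ?thesis unfolding tl_eq_def by (simp add: sum_subtractf)
qed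

lemma tl_eq_smult: "tl_eq m n f g \<Longrightarrow> tl_eq m n (\<lambda>w. a * f w) (\<lambda>w. a * g w)"
proof -
  assume "tl_eq m n f g"
  then have "(\<lambda>w. a * (f w - g w)) \<in> tl_ideal m n"
    unfolding tl_eq_def tl_ideal_def by (intro lin_span_smult)
  then show ?thesis unfolding tl_eq_def by (simp add: algebra_simps)
qed

lemma rel_ic:
  assumes "a + outs g \<le> c" "typed m n (w1 @ [(a, g), (c, h)] @ w2)"
  shows "tl_eq m n (dlt (w1 @ [(a, g), (c, h)] @ w2) :: word \<Rightarrow> 'k::field) (dlt (w1 @ [(c + ins g - outs g, h), (a, g)] @ w2))"
  unfolding tl_eq_def tl_ideal_def
  by (rule lin_span_base) (unfold rel_vecs_def, rule UnI1, rule UnI1, rule UnI1, use assms in blast)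

lemma rel_loop:
  assumes "typed m n (w1 @ [(a, Cup), (a, Cap)] @ w2)"
  shows "tl_eq m n (dlt (w1 @ [(a, Cup), (a, Cap)] @ w2) :: word \<Rightarrow> 'k::field) (dlt (w1 @ w2))"
  unfolding tl_eq_def tl_ideal_def
  by (rule lin_span_base) (unfold rel_vecs_def, rule UnI1, rule UnI1, rule UnI2, use assms in blast)

lemma rel_z1:
  assumes "typed m n (w1 @ [(a, Cup), (Suc a, Cap)] @ w2)"
  shows "tl_eq m n (dlt (w1 @ [(a, Cup), (Suc a, Cap)] @ w2) :: word \<Rightarrow> 'k::field) (\<lambda>_. 0)"
proof -
  have "(dlt (w1 @ [(a, Cup), (Suc a, Cap)] @ w2) :: word \<Rightarrow> 'k::field) \<in> tl_ideal m n"
    unfolding tl_ideal_def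
    by (rule lin_span_base) (unfold rel_vecs_def, rule UnI1, rule UnI2, use assms in blast)
  then show ?thesis unfolding tl_eq_def by simp
qed

lemma rel_z2:
  assumes "typed m n (w1 @ [(Suc a, Cup), (a, Cap)] @ w2)"
  shows "tl_eq m n (dlt (w1 @ [(Suc a, Cup), (a, Cap)] @ w2) :: word \<Rightarrow> 'k::field) (\<lambda>_. 0)"
proof -
  have "(dlt (w1 @ [(Suc a, Cup), (a, Cap)] @ w2) :: word \<Rightarrow> 'k::field) \<in> tl_ideal m n"
    unfolding tl_ideal_def
    by (rule lin_span_base) (unfold rel_vecs_def, rule UnI2, use assms in blast)
  then show ?thesis unfolding tl_eq_def by simp
qed

lemma cap_word_simps[simp]: "cap_word []" "cap_word (x # w) \<longleftrightarrow> snd x = Cap \<and> cap_word w"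
  "cap_word (v @ w) \<longleftrightarrow> cap_word v \<and> cap_word w"
  by (auto simp: cap_word_def)

lemma cup_word_simps[simp]: "cup_word []" "cup_word (x # w) \<longleftrightarrow> snd x = Cup \<and> cup_word w"
  "cup_word (v @ w) \<longleftrightarrow> cup_word v \<and> cup_word w"
  by (auto simp: cup_word_def)

lemma typed_Nil[simp]: "typed m n [] \<longleftrightarrow> n = m"
  by (auto simp: typed_def)

lemma typed_Cup[simp]: "typed m n ((a, Cup) # w) \<longleftrightarrow> a \<le> m \<and> typed (m + 2) n w"
  by (auto simp: typed_def)

lemma typed_Cap[simp]: "typed m n ((a, Cap) # w) \<longleftrightarrow> a + 2 \<le> m \<and> typed (m - 2) n w"
  by (auto simp: typed_def)

lemma typed_snoc: "typed m n (w @ [x]) \<longleftrightarrow> (\<exists>k. typed m k w \<and> typed k n [x])"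
  by (auto simp: typed_def tgt_append split: option.splits)

lemma typed_fun: "typed m n w \<Longrightarrow> typed m n' w \<Longrightarrow> n = n'"
  by (simp add: typed_def)

lemma cup_cap_normal:
  assumes "cup_word u" "typed k n (u @ [(a, Cap)])"
  shows "tl_eq k n (dlt (u @ [(a, Cap)])) (\<lambda>_. 0 :: 'k::field) \<or>
    (\<exists>v j u'. cap_word v \<and> cup_word u' \<and> typed k j v \<and> typed j n u' \<and>
       tl_eq k n (dlt (u @ [(a, Cap)]) :: word \<Rightarrow> 'k) (dlt (v @ u')))"
  using assms
proof (induction u arbitrary: a n rule: rev_induct)
  case Nil
  then show ?case
    by (intro disjI2 exI[of _ "[(a, Cap)]"] exI[of _ n] exI[of _ "[]"]) (auto simp: tl_eq_refl)
next
  case (snoc x u1)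
  obtain b where x: "x = (b, Cup)" using snoc(2) by (cases x) auto
  have "typed k n (u1 @ [(b, Cup), (a, Cap)])" using snoc(3) x by simp
  from typed_appendD[OF this] obtain n1 where t1: "typed k n1 u1" and bn1: "b \<le> n1" and an1: "a \<le> n1" and nn1: "n = n1"
    by auto
  have cu1: "cup_word u1" using snoc(2) by simp
  have tw: "typed k n (u1 @ [(b, Cup), (a, Cap)] @ [])" using snoc(3) x by simp
  consider "b = a" | "b = Suc a" | "a = Suc b" | "b + 2 \<le> a" | "a + 2 \<le> b" by linarith
  then show ?case
  proof cases
    case 1
    have "tl_eq k n (dlt (u1 @ [(b, Cup), (a, Cap)] @ []) :: word \<Rightarrow> 'k) (dlt (u1 @ []))"
      using rel_loop[of k n u1 a "[]"] tw 1 by simp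
    then show ?thesis using x cu1 t1 nn1
      by (intro disjI2 exI[of _ "[]"] exI[of _ k] exI[of _ u1]) auto
  next
    case 2
    have "tl_eq k n (dlt (u1 @ [(Suc a, Cup), (a, Cap)] @ []) :: word \<Rightarrow> 'k) (\<lambda>_. 0)"
      using rel_z2[of k n u1 a "[]"] tw 2 by simp
    then show ?thesis using x 2 by simp
  next
    case 3
    have "tl_eq k n (dlt (u1 @ [(b, Cup), (Suc b, Cap)] @ []) :: word \<Rightarrow> 'k) (\<lambda>_. 0)"
      using rel_z1[of k n u1 b "[]"] tw 3 by simp
    then show ?thesis using x 3 by simp
  next
    case 4
    have e: "tl_eq k n (dlt (u1 @ [(b, Cup), (a, Cap)] @ []) :: word \<Rightarrow> 'k) (dlt (u1 @ [(a - 2, Cap), (b, Cup)] @ []))"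
      using rel_ic[of b Cup a k n u1 Cap "[]"] tw 4 by simp
    have t2: "typed k (n1 - 2) (u1 @ [(a - 2, Cap)])"
      using t1 4 an1 by (auto simp: typed_snoc)
    have tb: "typed (n1 - 2) n [(b, Cup)]" using 4 an1 nn1 by auto
    from snoc.IH[OF cu1 t2] show ?thesis
    proof
      assume z: "tl_eq k (n1 - 2) (dlt (u1 @ [(a - 2, Cap)])) (\<lambda>_. 0 :: 'k)"
      have "tl_eq k n (dlt ([] @ (u1 @ [(a - 2, Cap)]) @ [(b, Cup)])) (\<lambda>_. 0 :: 'k)"
        by (rule tl_eq_ctx_dlt0[OF z _ tb]) simp
      then have "tl_eq k n (dlt (u1 @ [(b, Cup), (a, Cap)] @ [])) (\<lambda>_. 0 :: 'k)"
        using tl_eq_trans[OF e] by simp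
      then have "tl_eq k n (dlt ((u1 @ [x]) @ [(a, Cap)])) (\<lambda>_. 0 :: 'k)"
        using x by simp
      then show ?thesis ..
    next
      assume "\<exists>v j u'. cap_word v \<and> cup_word u' \<and> typed k j v \<and> typed j (n1 - 2) u' \<and>
       tl_eq k (n1 - 2) (dlt (u1 @ [(a - 2, Cap)]) :: word \<Rightarrow> 'k) (dlt (v @ u'))"
      then obtain v j u' where vu: "cap_word v" "cup_word u'" "typed k j v" "typed j (n1 - 2) u'"
        "tl_eq k (n1 - 2) (dlt (u1 @ [(a - 2, Cap)]) :: word \<Rightarrow> 'k) (dlt (v @ u'))" by blast
      have "tl_eq k n (dlt ([] @ (u1 @ [(a - 2, Cap)]) @ [(b, Cup)])) (dlt ([] @ (v @ u') @ [(b, Cup)]) :: word \<Rightarrow> 'k)"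
        by (rule tl_eq_ctx_dlt[OF vu(5) _ tb]) simp
      then have "tl_eq k n (dlt (u1 @ [(b, Cup), (a, Cap)] @ [])) (dlt (v @ (u' @ [(b, Cup)])) :: word \<Rightarrow> 'k)"
        using tl_eq_trans[OF e] by simp
      then have "tl_eq k n (dlt ((u1 @ [x]) @ [(a, Cap)])) (dlt (v @ (u' @ [(b, Cup)])) :: word \<Rightarrow> 'k)"
        using x by simp
      moreover have "typed j n (u' @ [(b, Cup)])" using vu(4) tb typed_append by blast
      ultimately show ?thesis using vu
        by (intro disjI2 exI[of _ v] exI[of _ j] exI[of _ "u' @ [(b, Cup)]"]) auto
    qed
  next
    case 5
    have tw2: "typed k n (u1 @ [(a, Cap), (b - 2, Cup)] @ [])"
    proof -
      have "typed n1 n1 [(a, Cap), (b - 2, Cup)]" using 5 bn1 by auto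
      then show ?thesis using t1 nn1 typed_append by fastforce
    qed
    have e0: "tl_eq k n (dlt (u1 @ [(a, Cap), (b - 2, Cup)] @ []) :: word \<Rightarrow> 'k) (dlt (u1 @ [(b - 2 + ins Cap - outs Cap, Cup), (a, Cap)] @ []))"
    proof -
      have "a + outs Cap \<le> b - 2" using 5 by simp
      from rel_ic[OF this tw2] show ?thesis .
    qed
    have e: "tl_eq k n (dlt (u1 @ [(b, Cup), (a, Cap)] @ []) :: word \<Rightarrow> 'k) (dlt (u1 @ [(a, Cap), (b - 2, Cup)] @ []))"
    proof -
      have "Suc (Suc (b - 2)) = b" using 5 by simp
      then show ?thesis using tl_eq_sym[OF e0] by simp
    qed
    have t2: "typed k (n1 - 2) (u1 @ [(a, Cap)])"
      using t1 5 bn1 by (auto simp: typed_snoc)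
    have tb: "typed (n1 - 2) n [(b - 2, Cup)]" using 5 bn1 nn1 by auto
    from snoc.IH[OF cu1 t2] show ?thesis
    proof
      assume z: "tl_eq k (n1 - 2) (dlt (u1 @ [(a, Cap)])) (\<lambda>_. 0 :: 'k)"
      have "tl_eq k n (dlt ([] @ (u1 @ [(a, Cap)]) @ [(b - 2, Cup)])) (\<lambda>_. 0 :: 'k)"
        by (rule tl_eq_ctx_dlt0[OF z _ tb]) simp
      then have "tl_eq k n (dlt (u1 @ [(b, Cup), (a, Cap)] @ [])) (\<lambda>_. 0 :: 'k)"
        using tl_eq_trans[OF e] by simp
      then have "tl_eq k n (dlt ((u1 @ [x]) @ [(a, Cap)])) (\<lambda>_. 0 :: 'k)"
        using x by simp
      then show ?thesis ..
    next
      assume "\<exists>v j u'. cap_word v \<and> cup_word u' \<and> typed k j v \<and> typed j (n1 - 2) u' \<and>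
       tl_eq k (n1 - 2) (dlt (u1 @ [(a, Cap)]) :: word \<Rightarrow> 'k) (dlt (v @ u'))"
      then obtain v j u' where vu: "cap_word v" "cup_word u'" "typed k j v" "typed j (n1 - 2) u'"
        "tl_eq k (n1 - 2) (dlt (u1 @ [(a, Cap)]) :: word \<Rightarrow> 'k) (dlt (v @ u'))" by blast
      have "tl_eq k n (dlt ([] @ (u1 @ [(a, Cap)]) @ [(b - 2, Cup)])) (dlt ([] @ (v @ u') @ [(b - 2, Cup)]) :: word \<Rightarrow> 'k)"
        by (rule tl_eq_ctx_dlt[OF vu(5) _ tb]) simp
      then have "tl_eq k n (dlt (u1 @ [(b, Cup), (a, Cap)] @ [])) (dlt (v @ (u' @ [(b - 2, Cup)])) :: word \<Rightarrow> 'k)"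
        using tl_eq_trans[OF e] by simp
      then have "tl_eq k n (dlt ((u1 @ [x]) @ [(a, Cap)])) (dlt (v @ (u' @ [(b - 2, Cup)])) :: word \<Rightarrow> 'k)"
        using x by simp
      moreover have "typed j n (u' @ [(b - 2, Cup)])" using vu(4) tb typed_append by blast
      ultimately show ?thesis using vu
        by (intro disjI2 exI[of _ v] exI[of _ j] exI[of _ "u' @ [(b - 2, Cup)]"]) auto
    qed
  qed
qed

lemma word_normal:
  assumes "typed m n w"
  shows "tl_eq m n (dlt w) (\<lambda>_. 0 :: 'k::field) \<or>
    (\<exists>v j u. cap_word v \<and> cup_word u \<and> typed m j v \<and> typed j n u \<and>
       tl_eq m n (dlt w :: word \<Rightarrow> 'k) (dlt (v @ u)))"
  using assms
proof (induction w arbitrary: n rule: rev_induct)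
  case Nil
  then show ?case
    by (intro disjI2 exI[of _ "[]"] exI[of _ m] exI[of _ "[]"]) (auto simp: tl_eq_refl)
next
  case (snoc x w)
  from snoc(2) obtain n1 where t1: "typed m n1 w" and tx: "typed n1 n [x]"
    by (auto simp: typed_snoc)
  from snoc.IH[OF t1] show ?case
  proof
    assume z: "tl_eq m n1 (dlt w) (\<lambda>_. 0 :: 'k)"
    have "tl_eq m n (dlt ([] @ w @ [x])) (\<lambda>_. 0 :: 'k)"
      by (rule tl_eq_ctx_dlt0[OF z _ tx]) simp
    then show ?thesis by simp
  next
    assume "\<exists>v j u. cap_word v \<and> cup_word u \<and> typed m j v \<and> typed j n1 u \<and>
       tl_eq m n1 (dlt w :: word \<Rightarrow> 'k) (dlt (v @ u))"
    then obtain v j u where vu: "cap_word v" "cup_word u" "typed m j v" "typed j n1 u"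
        "tl_eq m n1 (dlt w :: word \<Rightarrow> 'k) (dlt (v @ u))" by blast
    have e1: "tl_eq m n (dlt ([] @ w @ [x])) (dlt ([] @ (v @ u) @ [x]) :: word \<Rightarrow> 'k)"
      by (rule tl_eq_ctx_dlt[OF vu(5) _ tx]) simp
    obtain a g where xg: "x = (a, g)" by (cases x)
    show ?thesis
    proof (cases g)
      case Cup
      have "typed j n (u @ [x])" using vu(4) tx typed_append by blast
      then show ?thesis using e1 vu xg Cup
        by (intro disjI2 exI[of _ v] exI[of _ j] exI[of _ "u @ [x]"]) auto
    next
      case Cap
      have tu: "typed j n (u @ [(a, Cap)])" using vu(4) tx typed_append xg Cap by blast
      from cup_cap_normal[OF vu(2) tu] show ?thesis
      proof
        assume z: "tl_eq j n (dlt (u @ [(a, Cap)])) (\<lambda>_. 0 :: 'k)"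
        have "tl_eq m n (dlt (v @ (u @ [(a, Cap)]) @ [])) (\<lambda>_. 0 :: 'k)"
          by (rule tl_eq_ctx_dlt0[OF z vu(3)]) simp
        then have "tl_eq m n (dlt (w @ [x])) (\<lambda>_. 0 :: 'k)"
          using tl_eq_trans[OF e1] xg Cap by simp
        then show ?thesis ..
      next
        assume "\<exists>v' j' u'. cap_word v' \<and> cup_word u' \<and> typed j j' v' \<and> typed j' n u' \<and>
          tl_eq j n (dlt (u @ [(a, Cap)]) :: word \<Rightarrow> 'k) (dlt (v' @ u'))"
        then obtain v' j' u' where vu': "cap_word v'" "cup_word u'" "typed j j' v'" "typed j' n u'"
          "tl_eq j n (dlt (u @ [(a, Cap)]) :: word \<Rightarrow> 'k) (dlt (v' @ u'))" by blast
        have "tl_eq m n (dlt (v @ (u @ [(a, Cap)]) @ [])) (dlt (v @ (v' @ u') @ []) :: word \<Rightarrow> 'k)"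
          by (rule tl_eq_ctx_dlt[OF vu'(5) vu(3)]) simp
        then have "tl_eq m n (dlt (w @ [x])) (dlt ((v @ v') @ u') :: word \<Rightarrow> 'k)"
          using tl_eq_trans[OF e1] xg Cap by simp
        moreover have "typed m j' (v @ v')" using vu(3) vu'(3) typed_append by blast
        ultimately show ?thesis using vu vu'
          by (intro disjI2 exI[of _ "v @ v'"] exI[of _ j'] exI[of _ u']) auto
      qed
    qed
  qed
qed

datatype sym = SL | SR | ST nat

definition ins2 :: "nat \<Rightarrow> sym list \<Rightarrow> sym list" where
  "ins2 a U = take a U @ [SL, SR] @ drop a U"

definition del2 :: "nat \<Rightarrow> 'a list \<Rightarrow> 'a list" where
  "del2 a U = take a U @ drop (Suc (Suc a)) U"

fun capP :: "sym \<Rightarrow> sym \<Rightarrow> (nat \<times> nat) set \<Rightarrow> (nat \<times> nat) set option" where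
  "capP SL SR P = Some P"
| "capP (ST i) (ST j) P = Some (insert (i, j) P)"
| "capP _ _ P = None"

type_synonym st = "(nat \<times> nat) set \<times> sym list"

fun stp :: "layer \<Rightarrow> st \<Rightarrow> st option" where
  "stp (a, Cup) (P, U) = (if a \<le> length U then Some (P, ins2 a U) else None)"
| "stp (a, Cap) (P, U) = (if Suc a < length U then map_option (\<lambda>P'. (P', del2 a U)) (capP (U ! a) (U ! Suc a) P) else None)"

fun evalw :: "st \<Rightarrow> word \<Rightarrow> st option" where
  "evalw s [] = Some s"
| "evalw s (x # w) = (case stp x s of None \<Rightarrow> None | Some s' \<Rightarrow> evalw s' w)"

definition ev :: "nat \<Rightarrow> word \<Rightarrow> st option" where
  "ev m w = evalw ({}, map ST [0..<m]) w"

lemma evalw_append: "evalw s (x @ y) = Option.bind (evalw s x) (\<lambda>s'. evalw s' y)"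
  by (induction s x rule: evalw.induct) (auto split: option.splits)

lemma evalw2: "evalw s [x, y] = Option.bind (stp x s) (stp y)"
  by (auto split: option.splits)

lemma length_ins2[simp]: "length (ins2 a U) = length U + 2"
  by (simp add: ins2_def)

lemma length_del2[simp]: "Suc a < length U \<Longrightarrow> length (del2 a U) = length U - 2"
  by (simp add: del2_def)

lemma nth_ins2: "a \<le> length U \<Longrightarrow> i < length U + 2 \<Longrightarrow>
  ins2 a U ! i = (if i < a then U ! i else if i = a then SL else if i = Suc a then SR else U ! (i - 2))"
  by (auto simp: ins2_def nth_append min_def)

lemma nth_del2: "Suc a < length U \<Longrightarrow> i < length U - 2 \<Longrightarrow>
  del2 a U ! i = (if i < a then U ! i else U ! (i + 2))"
  by (auto simp: del2_def nth_append min_def)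

lemma capP_comm:
  "Option.bind (capP x y P) (capP z w) = Option.bind (capP z w P) (capP x y)"
  by (cases x; cases y; cases z; cases w) (auto simp: insert_commute)

lemma ins2_append: "length X = a \<Longrightarrow> ins2 a (X @ Y) = X @ SL # SR # Y"
  by (simp add: ins2_def)

lemma del2_append: "length X = a \<Longrightarrow> del2 a (X @ x # y # Y) = X @ Y"
  by (simp add: del2_def)

lemma split_at: "n \<le> length U \<Longrightarrow> (\<And>X Y. U = X @ Y \<Longrightarrow> length X = n \<Longrightarrow> P) \<Longrightarrow> P"
  by (metis append_take_drop_id length_take min_absorb2)

lemma split2: "2 \<le> length U \<Longrightarrow> (\<And>x y Z. U = x # y # Z \<Longrightarrow> P) \<Longrightarrow> P"
  by (cases U; cases "tl U") auto

lemma ins2_ins2: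
  assumes "a + 2 \<le> c" "c \<le> length U + 2"
  shows "ins2 c (ins2 a U) = ins2 a (ins2 (c - 2) U)"
proof -
  obtain X Y where U: "U = X @ Y" "length X = a" by (rule split_at[of a U]) (use assms in auto)
  obtain Y1 Y2 where Y: "Y = Y1 @ Y2" "length Y1 = c - 2 - a" by (rule split_at[of "c - 2 - a" Y]) (use assms U in auto)
  have "ins2 a U = (X @ SL # SR # Y1) @ Y2" using U Y ins2_append by simp
  then have l: "ins2 c (ins2 a U) = (X @ SL # SR # Y1) @ SL # SR # Y2"
    using ins2_append[of "X @ SL # SR # Y1" c Y2] U Y assms by simp
  have "ins2 (c - 2) U = (X @ Y1) @ SL # SR # Y2" using U Y assms ins2_append[of "X @ Y1" "c - 2" Y2] by simp
  then have r: "ins2 a (ins2 (c - 2) U) = X @ SL # SR # Y1 @ SL # SR # Y2"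
    using ins2_append[of X a] U by simp
  show ?thesis using l r by simp
qed

lemma del2_ins2:
  assumes "a + 2 \<le> c" "Suc c < length U + 2"
  shows "del2 c (ins2 a U) = ins2 a (del2 (c - 2) U)"
proof -
  obtain X Y where U: "U = X @ Y" "length X = a" by (rule split_at[of a U]) (use assms in auto)
  obtain Y1 Y2 where Y: "Y = Y1 @ Y2" "length Y1 = c - 2 - a" by (rule split_at[of "c - 2 - a" Y]) (use assms U in auto)
  obtain x y Z where Z: "Y2 = x # y # Z" by (rule split2[of Y2]) (use assms U Y in auto)
  have "ins2 a U = (X @ SL # SR # Y1) @ x # y # Z" using U Y Z ins2_append by simp
  then have l: "del2 c (ins2 a U) = (X @ SL # SR # Y1) @ Z"
    using del2_append[of "X @ SL # SR # Y1" c] U Y assms by simp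
  have "del2 (c - 2) U = (X @ Y1) @ Z" using U Y Z assms del2_append[of "X @ Y1" "c - 2"] by simp
  then have r: "ins2 a (del2 (c - 2) U) = X @ SL # SR # Y1 @ Z"
    using ins2_append[of X a] U by simp
  show ?thesis using l r by simp
qed

lemma del2_ins2':
  assumes "a \<le> c" "c + 2 \<le> length U"
  shows "del2 a (ins2 (c + 2) U) = ins2 c (del2 a U)"
proof -
  obtain X Y where U: "U = X @ Y" "length X = a" by (rule split_at[of a U]) (use assms in auto)
  obtain x y Z where Z: "Y = x # y # Z" by (rule split2[of Y]) (use assms U in auto)
  obtain Y1 Y2 where Y: "Z = Y1 @ Y2" "length Y1 = c - a" by (rule split_at[of "c - a" Z]) (use assms U Z in auto)
  have "ins2 (c + 2) U = (X @ x # y # Y1) @ SL # SR # Y2" using U Y Z assms ins2_append[of "X @ x # y # Y1" "c + 2"] by simp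
  then have l: "del2 a (ins2 (c + 2) U) = X @ Y1 @ SL # SR # Y2"
    using del2_append[of X a] U by simp
  have "del2 a U = (X @ Y1) @ Y2" using U Y Z del2_append[of X a] by simp
  then have r: "ins2 c (del2 a U) = (X @ Y1) @ SL # SR # Y2"
    using ins2_append[of "X @ Y1" c] U Y assms by simp
  show ?thesis using l r by simp
qed

lemma del2_del2:
  assumes "a \<le> c" "c + 3 < length U"
  shows "del2 c (del2 a U) = del2 a (del2 (c + 2) U)"
proof -
  obtain X Y where U: "U = X @ Y" "length X = a" by (rule split_at[of a U]) (use assms in auto)
  obtain x y Z where Z: "Y = x # y # Z" by (rule split2[of Y]) (use assms U in auto)
  obtain Y1 Y2 where Y: "Z = Y1 @ Y2" "length Y1 = c - a" by (rule split_at[of "c - a" Z]) (use assms U Z in auto)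
  obtain z w V where V: "Y2 = z # w # V" by (rule split2[of Y2]) (use assms U Z Y in auto)
  have "del2 a U = (X @ Y1) @ z # w # V" using U Y Z V del2_append[of X a] by simp
  then have l: "del2 c (del2 a U) = (X @ Y1) @ V"
    using del2_append[of "X @ Y1" c] U Y assms by simp
  have "del2 (c + 2) U = (X @ x # y # Y1) @ V" using U Y Z V assms del2_append[of "X @ x # y # Y1" "c + 2"] by simp
  then have r: "del2 a (del2 (c + 2) U) = X @ Y1 @ V"
    using del2_append[of X a] U by simp
  show ?thesis using l r by simp
qed

lemma comm_cupcup:
  assumes "a + 2 \<le> c"
  shows "evalw (P, U) [(a, Cup), (c, Cup)] = evalw (P, U) [(c - 2, Cup), (a, Cup)]"
proof (cases "c \<le> length U + 2")
  case True
  have l: "evalw (P, U) [(a, Cup), (c, Cup)] = Some (P, ins2 c (ins2 a U))" using True assms by simp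
  have r: "evalw (P, U) [(c - 2, Cup), (a, Cup)] = Some (P, ins2 a (ins2 (c - 2) U))" using True assms by simp
  show ?thesis unfolding l r ins2_ins2[OF assms True] ..
next
  case False
  have l: "evalw (P, U) [(a, Cup), (c, Cup)] = None" using False assms by simp
  have "\<not> c - 2 \<le> length U" using False by linarith
  then have r: "evalw (P, U) [(c - 2, Cup), (a, Cup)] = None" by simp
  show ?thesis unfolding l r ..
qed

lemma comm_cupcap:
  assumes "a + 2 \<le> c"
  shows "evalw (P, U) [(a, Cup), (c, Cap)] = evalw (P, U) [(c - 2, Cap), (a, Cup)]"
proof (cases "Suc c < length U + 2")
  case True
  have a: "a \<le> length U" using True assms by simp
  have cc: "Suc (c - 2) = c - Suc 0" using assms by simp
  have n1: "ins2 a U ! c = U ! (c - 2)" "ins2 a U ! Suc c = U ! Suc (c - 2)"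
    using True assms a unfolding cc by (auto simp: nth_ins2)
  have l: "del2 c (ins2 a U) = ins2 a (del2 (c - 2) U)" by (rule del2_ins2[OF assms True])
  have c2: "Suc (c - 2) < length U" using True assms by simp
  have a2: "a \<le> length (del2 (c - 2) U)" using c2 True assms by simp
  show ?thesis
    using a c2 a2 True
    by (cases "capP (U ! (c - 2)) (U ! Suc (c - 2)) P") (auto simp: n1 l)
next
  case False
  then have "\<not> Suc (c - 2) < length U" using assms by simp
  then show ?thesis using False assms by simp
qed

lemma comm_capcup:
  assumes "a \<le> c"
  shows "evalw (P, U) [(a, Cap), (c, Cup)] = evalw (P, U) [(c + 2, Cup), (a, Cap)]"
proof (cases "c + 2 \<le> length U")
  case True
  have n1: "ins2 (Suc (Suc c)) U ! a = U ! a" "ins2 (Suc (Suc c)) U ! Suc a = U ! Suc a"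
    using True assms by (auto simp: nth_ins2)
  have l: "del2 a (ins2 (Suc (Suc c)) U) = ins2 c (del2 a U)" using True assms del2_ins2' by simp
  have a1: "Suc a < length U" using True assms by simp
  have c1: "c \<le> length (del2 a U)" using a1 True assms by simp
  show ?thesis
    using a1 c1 True
    by (cases "capP (U ! a) (U ! Suc a) P") (auto simp: n1 l)
next
  case False
  then show ?thesis using assms
    by (cases "capP (U ! a) (U ! Suc a) P") auto
qed

lemma comm_capcap:
  assumes "a \<le> c"
  shows "evalw (P, U) [(a, Cap), (c, Cap)] = evalw (P, U) [(c + 2, Cap), (a, Cap)]"
proof (cases "c + 3 < length U")
  case True
  have n1: "del2 a U ! c = U ! Suc (Suc c)" "del2 a U ! Suc c = U ! Suc (Suc (Suc c))"
    using True assms by (auto simp: nth_del2 numeral_3_eq_3)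
  have n2: "del2 (Suc (Suc c)) U ! a = U ! a" "del2 (Suc (Suc c)) U ! Suc a = U ! Suc a"
    using True assms by (auto simp: nth_del2)
  have l0: "del2 c (del2 a U) = del2 a (del2 (c + 2) U)" by (rule del2_del2[OF assms True])
  have l: "del2 c (del2 a U) = del2 a (del2 (Suc (Suc c)) U)" using l0 by (simp only: add_2_eq_Suc')
  have a1: "Suc a < length U" "Suc c < length (del2 a U)" "Suc (Suc (Suc c)) < length U" "Suc a < length (del2 (Suc (Suc c)) U)"
    using True assms by (auto simp: numeral_3_eq_3)
  have cc: "Option.bind (capP (U ! a) (U ! Suc a) P) (capP (U ! Suc (Suc c)) (U ! Suc (Suc (Suc c))))
    = Option.bind (capP (U ! Suc (Suc c)) (U ! Suc (Suc (Suc c))) P) (capP (U ! a) (U ! Suc a))" by (rule capP_comm)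
  have L: "evalw (P, U) [(a, Cap), (c, Cap)] = map_option (\<lambda>P'. (P', del2 c (del2 a U)))
     (Option.bind (capP (U ! a) (U ! Suc a) P) (capP (U ! Suc (Suc c)) (U ! Suc (Suc (Suc c)))))"
    using a1 by (cases "capP (U ! a) (U ! Suc a) P") (auto simp: n1 split: option.splits)
  have R: "evalw (P, U) [(c + 2, Cap), (a, Cap)] = map_option (\<lambda>P'. (P', del2 a (del2 (Suc (Suc c)) U)))
     (Option.bind (capP (U ! Suc (Suc c)) (U ! Suc (Suc (Suc c))) P) (capP (U ! a) (U ! Suc a)))"
    using a1 by (cases "capP (U ! Suc (Suc c)) (U ! Suc (Suc (Suc c))) P") (auto simp: n2 split: option.splits)
  show ?thesis by (simp only: L R cc l)
next
  case False
  have R: "evalw (P, U) [(c + 2, Cap), (a, Cap)] = None" using False by simp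
  have L: "evalw (P, U) [(a, Cap), (c, Cap)] = None"
  proof (cases "Suc a < length U")
    case True
    have "\<not> Suc c < length (del2 a U)" using True False by simp
    then have e: "\<And>P'. evalw (P', del2 a U) [(c, Cap)] = None" by simp
    show ?thesis using True e by (cases "capP (U ! a) (U ! Suc a) P") simp_all
  qed simp
  show ?thesis by (simp only: L R)
qed

lemma comm_step:
  assumes "a + outs g \<le> c"
  shows "evalw s [(a, g), (c, h)] = evalw s [(c + ins g - outs g, h), (a, g)]"
proof -
  obtain P U where s: "s = (P, U)" by (cases s)
  show ?thesis
  proof (cases g; cases h)
    assume gh: "g = Cup" "h = Cup"
    have e: "c + ins Cup - outs Cup = c - 2" "a + 2 \<le> c" using assms gh by auto
    have "evalw (P, U) [(a, Cup), (c, Cup)] = evalw (P, U) [(c - 2, Cup), (a, Cup)]" by (rule comm_cupcup[OF e(2)])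
    then show ?thesis by (simp only: s gh e(1))
  next
    assume gh: "g = Cup" "h = Cap"
    have e: "c + ins Cup - outs Cup = c - 2" "a + 2 \<le> c" using assms gh by auto
    have "evalw (P, U) [(a, Cup), (c, Cap)] = evalw (P, U) [(c - 2, Cap), (a, Cup)]" by (rule comm_cupcap[OF e(2)])
    then show ?thesis by (simp only: s gh e(1))
  next
    assume gh: "g = Cap" "h = Cup"
    have e: "c + ins Cap - outs Cap = c + 2" "a \<le> c" using assms gh by auto
    have "evalw (P, U) [(a, Cap), (c, Cup)] = evalw (P, U) [(c + 2, Cup), (a, Cap)]" by (rule comm_capcup[OF e(2)])
    then show ?thesis by (simp only: s gh e(1))
  next
    assume gh: "g = Cap" "h = Cap"
    have e: "c + ins Cap - outs Cap = c + 2" "a \<le> c" using assms gh by auto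
    have "evalw (P, U) [(a, Cap), (c, Cap)] = evalw (P, U) [(c + 2, Cap), (a, Cap)]" by (rule comm_capcap[OF e(2)])
    then show ?thesis by (simp only: s gh e(1))
  qed
qed

definition PhiD :: "nat \<Rightarrow> st \<Rightarrow> (word \<Rightarrow> 'k::field) \<Rightarrow> 'k" where
  "PhiD m D f = (\<Sum>w\<in>{w. f w \<noteq> 0 \<and> ev m w = Some D}. f w)"

lemma PhiD_alt:
  assumes "finite S" "{w. f w \<noteq> 0} \<subseteq> S"
  shows "PhiD m D f = (\<Sum>w\<in>{w\<in>S. ev m w = Some D}. f w)"
  unfolding PhiD_def
  by (rule sum.mono_neutral_left) (use assms in auto)

lemma finite_supp_lin:
  assumes "finite {w. f w \<noteq> 0}" "finite {w. g w \<noteq> 0}"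
  shows "finite {w. f w + a * g w \<noteq> (0::'k::field)}"
proof -
  have "{w. f w + a * g w \<noteq> 0} \<subseteq> {w. f w \<noteq> 0} \<union> {w. g w \<noteq> 0}" by auto
  then show ?thesis using assms finite_subset by blast
qed

lemma PhiD_lin:
  assumes "finite {w. f w \<noteq> 0}" "finite {w. g w \<noteq> 0}"
  shows "PhiD m D (\<lambda>w. f w + a * g w) = PhiD m D f + a * (PhiD m D g :: 'k::field)"
proof -
  let ?S = "{w. f w \<noteq> 0} \<union> {w. g w \<noteq> 0}"
  have fs: "finite ?S" using assms by simp
  have "PhiD m D (\<lambda>w. f w + a * g w) = (\<Sum>w\<in>{w\<in>?S. ev m w = Some D}. f w + a * g w)"
    by (rule PhiD_alt[OF fs]) auto
  also have "\<dots> = (\<Sum>w\<in>{w\<in>?S. ev m w = Some D}. f w) + a * (\<Sum>w\<in>{w\<in>?S. ev m w = Some D}. g w)"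
    by (simp add: sum.distrib sum_distrib_left)
  also have "(\<Sum>w\<in>{w\<in>?S. ev m w = Some D}. f w) = PhiD m D f"
    by (rule PhiD_alt[OF fs, symmetric]) auto
  also have "(\<Sum>w\<in>{w\<in>?S. ev m w = Some D}. g w) = PhiD m D g"
    by (rule PhiD_alt[OF fs, symmetric]) auto
  finally show ?thesis .
qed

lemma PhiD_zero: "PhiD m D (\<lambda>_. 0) = 0"
  by (simp add: PhiD_def)

lemma finite_supp_dlt: "finite {w. dlt x w \<noteq> (0::'k::field)}"
proof -
  have "{w. dlt x w \<noteq> (0::'k)} \<subseteq> {x}" by (auto simp: dlt_def)
  then show ?thesis using finite_subset by blast
qed

lemma PhiD_dlt: "PhiD m D (dlt x :: word \<Rightarrow> 'k::field) = (if ev m x = Some D then 1 else 0)"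
proof -
  have "PhiD m D (dlt x :: word \<Rightarrow> 'k) = (\<Sum>w\<in>{w\<in>{x}. ev m w = Some D}. dlt x w)"
    by (rule PhiD_alt) (auto simp: dlt_def)
  moreover have "{w\<in>{x}. ev m w = Some D} = (if ev m x = Some D then {x} else {})" by auto
  ultimately show ?thesis by (simp add: dlt_def)
qed

lemma PhiD_dlt_diff:
  assumes "ev m x = ev m y"
  shows "PhiD m D (\<lambda>w. dlt x w - dlt y w :: 'k::field) = 0"
proof -
  have "(\<lambda>w. dlt x w - dlt y w :: 'k) = (\<lambda>w. dlt x w + (-1) * dlt y w)" by simp
  then show ?thesis using PhiD_lin[OF finite_supp_dlt finite_supp_dlt, of m D x "-1" y] assms
    by (simp add: PhiD_dlt)
qed

lemma evalw_len:
  "tgt k w = Some k' \<Longrightarrow> length U = k \<Longrightarrow> evalw (P, U) w = Some (P', U') \<Longrightarrow> length U' = k'"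
proof (induction w arbitrary: k P U)
  case Nil
  then show ?case by simp
next
  case (Cons x w)
  obtain a g where x: "x = (a, g)" by (cases x)
  show ?case
  proof (cases g)
    case Cup
    have a: "a \<le> length U" and e: "evalw (P, ins2 a U) w = Some (P', U')" and t: "tgt (k + 2) w = Some k'"
      using Cons.prems x Cup by (auto split: if_splits)
    show ?thesis by (rule Cons.IH[OF t _ e]) (use a Cons.prems in simp)
  next
    case Cap
    have a: "Suc a < length U" and t: "tgt (k - 2) w = Some k'"
      using Cons.prems x Cap by (auto split: if_splits option.splits)
    obtain P1 where e: "evalw (P1, del2 a U) w = Some (P', U')"
      using Cons.prems x Cap a by (auto split: if_splits option.splits)
    show ?thesis by (rule Cons.IH[OF t _ e]) (use a Cons.prems in simp)
  qed
qed

lemma del2_ins2_same: "a \<le> length U \<Longrightarrow> del2 a (ins2 a U) = U"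
  using ins2_append[of "take a U" a "drop a U"] del2_append[of "take a U" a SL SR "drop a U"] by simp

lemma ev_loop:
  assumes "typed m n (w1 @ [(a, Cup), (a, Cap)] @ w2)"
  shows "ev m (w1 @ [(a, Cup), (a, Cap)] @ w2) = ev m (w1 @ w2)"
proof -
  obtain k where t1: "typed m k w1" and t2: "typed k n ([(a, Cup), (a, Cap)] @ w2)"
    using typed_appendD[OF assms] by blast
  have ak: "a \<le> k" using t2 by simp
  show ?thesis
  proof (cases "ev m w1")
    case None
    then show ?thesis unfolding ev_def evalw_append by simp
  next
    case (Some s)
    obtain P U where s: "s = (P, U)" by (cases s)
    have "length U = k" using evalw_len[of m w1 k "map ST [0..<m]" "{}" P U] t1 Some s
      by (simp add: typed_def ev_def)
    then have "evalw (P, U) [(a, Cup), (a, Cap)] = Some (P, U)"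
      using ak by (simp add: nth_ins2 del2_ins2_same)
    then show ?thesis using Some s unfolding ev_def evalw_append by simp
  qed
qed

lemma capP_SL2: "capP x SL P = None"
  by (cases x) auto

lemma ev_z1: "ev m (w1 @ [(a, Cup), (Suc a, Cap)] @ w2) = None"
proof -
  have "evalw s [(a, Cup), (Suc a, Cap)] = None" for s
  proof -
    obtain P U where s: "s = (P, U)" by (cases s)
    show ?thesis unfolding s
      by (auto simp: nth_ins2)
  qed
  then show ?thesis unfolding ev_def evalw_append by (cases "evalw ({}, map ST [0..<m]) w1") auto
qed

lemma ev_z2: "ev m (w1 @ [(Suc a, Cup), (a, Cap)] @ w2) = None"
proof -
  have "evalw s [(Suc a, Cup), (a, Cap)] = None" for s
  proof -
    obtain P U where s: "s = (P, U)" by (cases s)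
    show ?thesis unfolding s
      by (auto simp: nth_ins2 capP_SL2)
  qed
  then show ?thesis unfolding ev_def evalw_append by (cases "evalw ({}, map ST [0..<m]) w1") auto
qed

lemma ev_z1': "ev m (w1 @ (a, Cup) # (Suc a, Cap) # w2) = None"
  using ev_z1[of m w1 a w2] by simp

lemma ev_z2': "ev m (w1 @ (Suc a, Cup) # (a, Cap) # w2) = None"
  using ev_z2[of m w1 a w2] by simp

lemma ev_ic:
  assumes "a + outs g \<le> c"
  shows "ev m (w1 @ [(a, g), (c, h)] @ w2) = ev m (w1 @ [(c + ins g - outs g, h), (a, g)] @ w2)"
  unfolding ev_def evalw_append comm_step[OF assms] ..

lemma rel_Phi:
  assumes "r \<in> rel_vecs m n"
  shows "finite {w. r w \<noteq> 0} \<and> (\<forall>D. PhiD m D r = (0::'k::field))"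
  using assms[unfolded rel_vecs_def]
proof (elim UnE)
  assume "r \<in> {(\<lambda>w. dlt (w1 @ [(a, g), (c, h)] @ w2) w - dlt (w1 @ [(c + ins g - outs g, h), (a, g)] @ w2) w) |
     w1 w2 a g c h. a + outs g \<le> c \<and> typed m n (w1 @ [(a, g), (c, h)] @ w2)}"
  then obtain w1 w2 a g c h where r: "r = (\<lambda>w. dlt (w1 @ [(a, g), (c, h)] @ w2) w - dlt (w1 @ [(c + ins g - outs g, h), (a, g)] @ w2) w)"
    "a + outs g \<le> c" by blast
  have f: "finite {w. r w \<noteq> 0}"
    using finite_supp_lin[OF finite_supp_dlt finite_supp_dlt, of "w1 @ [(a, g), (c, h)] @ w2" "-1"] r(1) by simp
  have "PhiD m D r = 0" for D unfolding r(1) by (rule PhiD_dlt_diff[OF ev_ic[OF r(2)]])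
  then show ?thesis using f by blast
next
  assume "r \<in> {(\<lambda>w. dlt (w1 @ [(a, Cup), (a, Cap)] @ w2) w - dlt (w1 @ w2) w) | w1 w2 a. typed m n (w1 @ [(a, Cup), (a, Cap)] @ w2)}"
  then obtain w1 w2 a where r: "r = (\<lambda>w. dlt (w1 @ [(a, Cup), (a, Cap)] @ w2) w - dlt (w1 @ w2) w)"
    "typed m n (w1 @ [(a, Cup), (a, Cap)] @ w2)" by blast
  have f: "finite {w. r w \<noteq> 0}"
    using finite_supp_lin[OF finite_supp_dlt finite_supp_dlt, of "w1 @ [(a, Cup), (a, Cap)] @ w2" "-1"] r(1) by simp
  have "PhiD m D r = 0" for D unfolding r(1) by (rule PhiD_dlt_diff[OF ev_loop[OF r(2)]])
  then show ?thesis using f by blast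
next
  assume "r \<in> {dlt (w1 @ [(a, Cup), (Suc a, Cap)] @ w2) | w1 w2 a. typed m n (w1 @ [(a, Cup), (Suc a, Cap)] @ w2)}"
  then obtain w1 w2 a where r: "r = dlt (w1 @ [(a, Cup), (Suc a, Cap)] @ w2)" by blast
  show ?thesis unfolding r by (simp add: finite_supp_dlt PhiD_dlt ev_z1')
next
  assume "r \<in> {dlt (w1 @ [(Suc a, Cup), (a, Cap)] @ w2) | w1 w2 a. typed m n (w1 @ [(Suc a, Cup), (a, Cap)] @ w2)}"
  then obtain w1 w2 a where r: "r = dlt (w1 @ [(Suc a, Cup), (a, Cap)] @ w2)" by blast
  show ?thesis unfolding r by (simp add: finite_supp_dlt PhiD_dlt ev_z2')
qed

lemma ideal_Phi:
  assumes "f \<in> tl_ideal m n"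
  shows "finite {w. f w \<noteq> 0} \<and> (\<forall>D. PhiD m D f = (0::'k::field))"
  using assms unfolding tl_ideal_def
proof (induction rule: lin_span_induct)
  case 1
  then show ?case by (simp add: PhiD_zero)
next
  case (2 f s a)
  have s: "finite {w. s w \<noteq> 0}" "\<forall>D. PhiD m D s = 0" using rel_Phi[OF 2(2)] by auto
  show ?case using 2(1) s finite_supp_lin[of f s a] PhiD_lin[of f s m _ a] by simp
qed

fun isT :: "sym \<Rightarrow> bool" where
  "isT (ST i) = True" | "isT SL = False" | "isT SR = False"

definition allT :: "sym list \<Rightarrow> bool" where
  "allT U \<longleftrightarrow> (\<forall>x\<in>set U. isT x)"

fun runcup :: "sym list \<Rightarrow> word \<Rightarrow> sym list" where
  "runcup U [] = U"
| "runcup U (x # w) = runcup (ins2 (fst x) U) w"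

definition thr :: "st \<Rightarrow> nat" where
  "thr D = length (filter isT (snd D))"

lemma runcup_snoc: "runcup U (w @ [(a, g)]) = ins2 a (runcup U w)"
  by (induction U w rule: runcup.induct) auto

lemma length_runcup: "length (runcup U w) = length U + 2 * length w"
  by (induction U w rule: runcup.induct) auto

lemma filter_ins2: "filter isT (ins2 a U) = filter isT U"
proof -
  have "filter isT (ins2 a U) = filter isT (take a U) @ filter isT (drop a U)"
    by (simp add: ins2_def)
  also have "\<dots> = filter isT U" by (metis append_take_drop_id filter_append)
  finally show ?thesis .
qed

lemma filter_runcup: "filter isT (runcup U w) = filter isT U"
  by (induction U w rule: runcup.induct) (auto simp: filter_ins2)

lemma allT_filter: "allT U \<Longrightarrow> filter isT U = U"
  by (simp add: allT_def)

lemma set_del2: "set (del2 a U) \<subseteq> set U"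
  unfolding del2_def by (auto dest: in_set_takeD in_set_dropD)

lemma allT_del2: "allT U \<Longrightarrow> allT (del2 a U)"
  unfolding allT_def using set_del2[of a U] by (meson subsetD)

lemma isT_ex: "isT x \<Longrightarrow> \<exists>i. x = ST i"
  by (cases x) auto

lemma cap_word_len: "cap_word v \<Longrightarrow> tgt m v = Some k \<Longrightarrow> m = k + 2 * length v"
proof (induction v arbitrary: m)
  case Nil
  then show ?case by simp
next
  case (Cons x v)
  obtain a g where x: "x = (a, g)" by (cases x)
  then have g: "g = Cap" using Cons by simp
  have a: "a + 2 \<le> m" and t: "tgt (m - 2) v = Some k" using Cons.prems x g by (auto split: if_splits)
  have "m - 2 = k + 2 * length v" using Cons.IH[OF _ t] Cons.prems(1) by simp
  then show ?case using a x by simp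
qed

lemma evalw_cup:
  "cup_word u \<Longrightarrow> tgt (length U) u = Some n \<Longrightarrow> evalw (P, U) u = Some (P, runcup U u)"
proof (induction u arbitrary: U)
  case Nil
  then show ?case by simp
next
  case (Cons x u)
  obtain a g where x: "x = (a, g)" by (cases x)
  then have g: "g = Cup" using Cons by simp
  have a: "a \<le> length U" and t: "tgt (length (ins2 a U)) u = Some n"
    using Cons.prems x g by (auto split: if_splits)
  show ?case using Cons.IH[OF _ t] Cons.prems a x g by simp
qed

lemma evalw_cap:
  "cap_word v \<Longrightarrow> allT U \<Longrightarrow> tgt (length U) v = Some k \<Longrightarrow>
    \<exists>P' U'. evalw (P, U) v = Some (P', U') \<and> allT U' \<and> length U' = k"
proof (induction v arbitrary: P U)
  case Nil
  then show ?case by simp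
next
  case (Cons x v)
  obtain a g where x: "x = (a, g)" by (cases x)
  then have g: "g = Cap" using Cons by simp
  have a: "Suc a < length U" and t: "tgt (length U - 2) v = Some k"
    using Cons.prems x g by (auto split: if_splits)
  obtain i j where ij: "U ! a = ST i" "U ! Suc a = ST j"
    using Cons.prems(2) a isT_ex unfolding allT_def by (meson Suc_lessD nth_mem)
  have t': "tgt (length (del2 a U)) v = Some k" using t a by simp
  have cv: "cap_word v" using Cons.prems(1) by simp
  have "\<exists>P' U'. evalw (insert (i, j) P, del2 a U) v = Some (P', U') \<and> allT U' \<and> length U' = k"
    by (rule Cons.IH[OF cv allT_del2[OF Cons.prems(2)] t'])
  then obtain P' U' where e: "evalw (insert (i, j) P, del2 a U) v = Some (P', U')" "allT U'" "length U' = k"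
    by blast
  have "evalw (P, U) (x # v) = evalw (insert (i, j) P, del2 a U) v"
    using a ij x g by simp
  then show ?case using e by simp
qed

lemma ev_capcup:
  assumes "cap_word v" "cup_word u" "typed m k v" "typed k n u"
  shows "\<exists>P U. evalw ({}, map ST [0..<m]) v = Some (P, U) \<and> allT U \<and> length U = k \<and>
     ev m (v @ u) = Some (P, runcup U u)"
proof -
  have aT: "allT (map ST [0..<m])" by (auto simp: allT_def)
  have "\<exists>P U. evalw ({}, map ST [0..<m]) v = Some (P, U) \<and> allT U \<and> length U = k"
    by (rule evalw_cap[OF assms(1) aT]) (use assms(3) in \<open>simp add: typed_def\<close>)
  then obtain P U where PU: "evalw ({}, map ST [0..<m]) v = Some (P, U)" "allT U" "length U = k"
    by blast
  have "evalw (P, U) u = Some (P, runcup U u)"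
    using evalw_cup[OF assms(2)] assms(4) PU(3) by (simp add: typed_def)
  then show ?thesis using PU unfolding ev_def evalw_append by simp
qed

lemma thr_capcup:
  assumes "cap_word v" "cup_word u" "typed m k v" "typed k n u"
  shows "\<exists>D. ev m (v @ u) = Some D \<and> thr D = k"
proof -
  obtain P U where "evalw ({}, map ST [0..<m]) v = Some (P, U)" "allT U" "length U = k"
     "ev m (v @ u) = Some (P, runcup U u)"
    using ev_capcup[OF assms] by blast
  then show ?thesis by (auto simp: thr_def filter_runcup allT_filter)
qed

lemma cup_word_len: "cup_word u \<Longrightarrow> tgt m u = Some n \<Longrightarrow> n = m + 2 * length u"
proof (induction u arbitrary: m)
  case Nil
  then show ?case by simp
next
  case (Cons x u)
  obtain a g where x: "x = (a, g)" by (cases x)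
  then have g: "g = Cup" using Cons by simp
  have t: "tgt (m + 2) u = Some n" using Cons.prems x g by (auto split: if_splits)
  have "n = m + 2 + 2 * length u" using Cons.IH[OF _ t] Cons.prems(1) by simp
  then show ?case by simp
qed

lemma typed_cup_snoc: "typed k n (u @ [(c, Cup)]) \<Longrightarrow> typed k (n - 2) u \<and> c \<le> n - 2 \<and> 2 \<le> n"
  by (auto simp: typed_snoc)

lemma cup_extract:
  assumes "cup_word u" "typed (length U) n u" "allT U" "Suc a < n"
    "runcup U u ! a = SL" "runcup U u ! Suc a = SR"
  shows "\<exists>u2. cup_word u2 \<and> typed (length U) (n - 2) u2 \<and>
     tl_eq (length U) n (dlt u :: word \<Rightarrow> 'k::field) (dlt (u2 @ [(a, Cup)])) \<and>
     runcup U u2 = del2 a (runcup U u)"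
  using assms
proof (induction u arbitrary: n a rule: rev_induct)
  case Nil
  then have "a < length U" by simp
  then have "U ! a \<in> set U" by (rule nth_mem)
  then have "isT (U ! a)" using Nil.prems(3) by (simp add: allT_def)
  then show ?case using Nil.prems(5) by simp
next
  case (snoc x u3)
  obtain c g where x: "x = (c, g)" by (cases x)
  then have g: "g = Cup" using snoc.prems(1) by simp
  let ?L = "length U"
  let ?Y = "runcup U u3"
  have cu3: "cup_word u3" using snoc.prems(1) by simp
  have ty: "typed ?L (n - 2) u3" "c \<le> n - 2" "2 \<le> n" using typed_cup_snoc[of ?L n u3 c] snoc.prems(2) x g by auto
  have lY: "length ?Y = n - 2"
    using cup_word_len[OF cu3] ty(1) length_runcup[of U u3] by (simp add: typed_def)
  have X: "runcup U (u3 @ [x]) = ins2 c ?Y" using x by (simp add: runcup_snoc)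
  have cY: "c \<le> length ?Y" using lY ty by simp
  have nX: "\<And>i. i < n \<Longrightarrow> runcup U (u3 @ [x]) ! i = (if i < c then ?Y ! i else if i = c then SL else if i = Suc c then SR else ?Y ! (i - 2))"
    unfolding X using nth_ins2[OF cY] lY ty by simp
  have tn: "typed (n - 2) n [(c, Cup)]" using ty by auto
  consider "c = a" | "c = Suc a" | "Suc c = a" | "a + 2 \<le> c" | "c + 2 \<le> a" by linarith
  then show ?case
  proof cases
    case 1
    have "del2 a (runcup U (u3 @ [x])) = ?Y" unfolding X 1 by (rule del2_ins2_same) (use cY 1 in simp)
    then show ?thesis using cu3 ty 1 x g by (intro exI[of _ u3]) (auto simp: tl_eq_refl)
  next
    case 2
    then show ?thesis using nX[of "Suc a"] snoc.prems(4,6) by simp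
  next
    case 3
    then show ?thesis using nX[of a] snoc.prems(4,5) by simp
  next
    case 4
    have y1: "?Y ! a = SL" "?Y ! Suc a = SR" using nX[of a] nX[of "Suc a"] 4 snoc.prems(4,5,6) by auto
    have "Suc a < n - 2" using 4 ty by simp
    from snoc.IH[OF cu3 ty(1) snoc.prems(3) this y1]
    obtain u4 where u4: "cup_word u4" "typed ?L (n - 2 - 2) u4"
      "tl_eq ?L (n - 2) (dlt u3 :: word \<Rightarrow> 'k) (dlt (u4 @ [(a, Cup)]))" "runcup U u4 = del2 a ?Y" by blast
    have e1: "tl_eq ?L n (dlt ([] @ u3 @ [(c, Cup)]) :: word \<Rightarrow> 'k) (dlt ([] @ (u4 @ [(a, Cup)]) @ [(c, Cup)]))"
      by (rule tl_eq_ctx_dlt[OF u4(3) _ tn]) simp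
    have tw: "typed ?L n (u4 @ [(a, Cup), (c, Cup)] @ [])"
    proof -
      have "typed (n - 2 - 2) n [(a, Cup), (c, Cup)]" using 4 ty by auto
      then show ?thesis using u4(2) typed_append by fastforce
    qed
    have e2: "tl_eq ?L n (dlt (u4 @ [(a, Cup), (c, Cup)] @ []) :: word \<Rightarrow> 'k) (dlt (u4 @ [(c + ins Cup - outs Cup, Cup), (a, Cup)] @ []))"
      by (rule rel_ic) (use 4 tw in auto)
    have e: "tl_eq ?L n (dlt (u3 @ [x]) :: word \<Rightarrow> 'k) (dlt ((u4 @ [(c - 2, Cup)]) @ [(a, Cup)]))"
      using tl_eq_trans[OF e1[simplified] e2[simplified]] x g by simp
    have r: "runcup U (u4 @ [(c - 2, Cup)]) = del2 a (runcup U (u3 @ [x]))"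
    proof -
      have "del2 a (ins2 (c - 2 + 2) ?Y) = ins2 (c - 2) (del2 a ?Y)"
        by (rule del2_ins2') (use 4 lY ty snoc.prems(4) in auto)
      moreover have cc: "c - 2 + 2 = c" using 4 by simp
      ultimately have "del2 a (ins2 c ?Y) = ins2 (c - 2) (del2 a ?Y)" by simp
      then show ?thesis unfolding X using u4(4) by (simp add: runcup_snoc)
    qed
    have t2: "typed ?L (n - 2) (u4 @ [(c - 2, Cup)])"
    proof -
      have "typed (n - 2 - 2) (n - 2) [(c - 2, Cup)]" using 4 ty by auto
      then show ?thesis using u4(2) typed_append by fastforce
    qed
    show ?thesis using u4(1) t2 e r by (intro exI[of _ "u4 @ [(c - 2, Cup)]"]) auto
  next
    case 5
    have sa: "Suc (a - 2) = a - 1" using 5 by simp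
    have y1: "?Y ! (a - 2) = SL" "?Y ! Suc (a - 2) = SR" unfolding sa using nX[of a] nX[of "Suc a"] 5 snoc.prems(4,5,6) by auto
    have "Suc (a - 2) < n - 2" using 5 snoc.prems(4) by simp
    from snoc.IH[OF cu3 ty(1) snoc.prems(3) this y1]
    obtain u4 where u4: "cup_word u4" "typed ?L (n - 2 - 2) u4"
      "tl_eq ?L (n - 2) (dlt u3 :: word \<Rightarrow> 'k) (dlt (u4 @ [(a - 2, Cup)]))" "runcup U u4 = del2 (a - 2) ?Y" by blast
    have e1: "tl_eq ?L n (dlt ([] @ u3 @ [(c, Cup)]) :: word \<Rightarrow> 'k) (dlt ([] @ (u4 @ [(a - 2, Cup)]) @ [(c, Cup)]))"
      by (rule tl_eq_ctx_dlt[OF u4(3) _ tn]) simp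
    have tw: "typed ?L n (u4 @ [(c, Cup), (a, Cup)] @ [])"
    proof -
      have "typed (n - 2 - 2) n [(c, Cup), (a, Cup)]" using 5 ty snoc.prems(4) by auto
      then show ?thesis using u4(2) typed_append by fastforce
    qed
    have e2: "tl_eq ?L n (dlt (u4 @ [(c, Cup), (a, Cup)] @ []) :: word \<Rightarrow> 'k) (dlt (u4 @ [(a + ins Cup - outs Cup, Cup), (c, Cup)] @ []))"
      by (rule rel_ic) (use 5 tw in auto)
    have e: "tl_eq ?L n (dlt (u3 @ [x]) :: word \<Rightarrow> 'k) (dlt ((u4 @ [(c, Cup)]) @ [(a, Cup)]))"
      using tl_eq_trans[OF e1[simplified] tl_eq_sym[OF e2[simplified]]] x g by simp
    have r: "runcup U (u4 @ [(c, Cup)]) = del2 a (runcup U (u3 @ [x]))"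
    proof -
      have "del2 a (ins2 c ?Y) = ins2 c (del2 (a - 2) ?Y)"
        by (rule del2_ins2) (use 5 lY ty snoc.prems(4) in auto)
      then show ?thesis unfolding X using u4(4) by (simp add: runcup_snoc)
    qed
    have t2: "typed ?L (n - 2) (u4 @ [(c, Cup)])"
    proof -
      have "typed (n - 2 - 2) (n - 2) [(c, Cup)]" using 5 ty snoc.prems(4) by auto
      then show ?thesis using u4(2) typed_append by fastforce
    qed
    show ?thesis using u4(1) t2 e r by (intro exI[of _ "u4 @ [(c, Cup)]"]) auto
  qed
qed

lemma cup_unique:
  assumes "cup_word u" "cup_word u'" "typed (length U) n u" "typed (length U) n u'" "allT U"
    "runcup U u = runcup U u'"
  shows "tl_eq (length U) n (dlt u :: word \<Rightarrow> 'k::field) (dlt u')"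
  using assms
proof (induction u arbitrary: n u' rule: rev_induct)
  case Nil
  have "n = length U" using Nil.prems(3) by simp
  then have "n = n + 2 * length u'" using cup_word_len[OF Nil.prems(2), of "length U" n] Nil.prems(4) by (simp add: typed_def)
  then have "u' = []" by simp
  then show ?case by (simp add: tl_eq_refl)
next
  case (snoc x u1)
  obtain a g where x: "x = (a, g)" by (cases x)
  then have g: "g = Cup" using snoc.prems(1) by simp
  let ?L = "length U"
  have cu1: "cup_word u1" using snoc.prems(1) by simp
  have ty: "typed ?L (n - 2) u1" "a \<le> n - 2" "2 \<le> n" using typed_cup_snoc[of ?L n u1 a] snoc.prems(3) x g by auto
  have lY: "length (runcup U u1) = n - 2"
    using cup_word_len[OF cu1] ty(1) length_runcup[of U u1] by (simp add: typed_def)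
  have X: "runcup U (u1 @ [x]) = ins2 a (runcup U u1)" using x by (simp add: runcup_snoc)
  have aY: "a \<le> length (runcup U u1)" using lY ty by simp
  have s1: "runcup U u' ! a = SL" "runcup U u' ! Suc a = SR"
    using snoc.prems(6) unfolding X using nth_ins2[OF aY] lY ty by auto
  have "Suc a < n" using ty by simp
  from cup_extract[OF snoc.prems(2,4,5) this s1]
  obtain u2 where u2: "cup_word u2" "typed ?L (n - 2) u2"
    "tl_eq ?L n (dlt u' :: word \<Rightarrow> 'k) (dlt (u2 @ [(a, Cup)]))" "runcup U u2 = del2 a (runcup U u')" by blast
  have "runcup U u2 = runcup U u1"
    using u2(4) snoc.prems(6) unfolding X using del2_ins2_same[OF aY] by simp
  from snoc.IH[OF cu1 u2(1) ty(1) u2(2) snoc.prems(5) this[symmetric]]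
  have "tl_eq ?L (n - 2) (dlt u1 :: word \<Rightarrow> 'k) (dlt u2)" .
  then have "tl_eq ?L n (dlt ([] @ u1 @ [(a, Cup)]) :: word \<Rightarrow> 'k) (dlt ([] @ u2 @ [(a, Cup)]))"
    by (rule tl_eq_ctx_dlt) (use ty in auto)
  then show ?case using tl_eq_sym[OF u2(3)] x g tl_eq_trans by fastforce
qed

definition cinv :: "st \<Rightarrow> bool" where
  "cinv s \<longleftrightarrow> allT (snd s) \<and> distinct (snd s) \<and> (\<forall>q\<in>fst s. ST (fst q) \<notin> set (snd s) \<and> ST (snd q) \<notin> set (snd s))"

lemma capP_Some: "capP x y P = Some P1 \<Longrightarrow> P1 = P \<or> (\<exists>i j. x = ST i \<and> y = ST j \<and> P1 = insert (i, j) P)"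
  by (cases x; cases y) auto

lemma cap_mono:
  "cap_word w \<Longrightarrow> evalw (P, U) w = Some (P', U') \<Longrightarrow>
    P \<subseteq> P' \<and> (\<forall>q\<in>P' - P. ST (fst q) \<in> set U \<and> ST (snd q) \<in> set U) \<and> set U' \<subseteq> set U"
proof (induction w arbitrary: P U)
  case Nil
  then show ?case by simp
next
  case (Cons x w)
  obtain a g where x: "x = (a, g)" by (cases x)
  then have g: "g = Cap" using Cons.prems by simp
  have a: "Suc a < length U" using Cons.prems x g by (auto split: if_splits)
  obtain P1 where P1: "capP (U ! a) (U ! Suc a) P = Some P1" "evalw (P1, del2 a U) w = Some (P', U')"
    using Cons.prems x g a by (auto split: option.splits)
  have IH: "P1 \<subseteq> P' \<and> (\<forall>q\<in>P' - P1. ST (fst q) \<in> set (del2 a U) \<and> ST (snd q) \<in> set (del2 a U)) \<and> set U' \<subseteq> set (del2 a U)"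
    using Cons.IH[OF _ P1(2)] Cons.prems(1) by simp
  have s: "set (del2 a U) \<subseteq> set U" by (rule set_del2)
  have m1: "U ! a \<in> set U" "U ! Suc a \<in> set U" using a by auto
  from capP_Some[OF P1(1)] show ?case
  proof
    assume "P1 = P"
    then show ?thesis using IH s by blast
  next
    assume "\<exists>i j. U ! a = ST i \<and> U ! Suc a = ST j \<and> P1 = insert (i, j) P"
    then obtain i j where ij: "U ! a = ST i" "U ! Suc a = ST j" "P1 = insert (i, j) P" by blast
    show ?thesis
    proof (intro conjI ballI)
      show "P \<subseteq> P'" using IH ij by blast
    next
      fix q assume q: "q \<in> P' - P"
      show "ST (fst q) \<in> set U"
      proof (cases "q = (i, j)")
        case True then show ?thesis using m1 ij by simp
      next
        case False then have "q \<in> P' - P1" using q ij by blast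
        then show ?thesis using IH s by blast
      qed
      show "ST (snd q) \<in> set U"
      proof (cases "q = (i, j)")
        case True then show ?thesis using m1 ij by simp
      next
        case False then have "q \<in> P' - P1" using q ij by blast
        then show ?thesis using IH s by blast
      qed
    next
      show "set U' \<subseteq> set U" using IH s by blast
    qed
  qed
qed

lemma del2_decomp:
  assumes "Suc a < length U"
  obtains X x y Y where "U = X @ x # y # Y" "length X = a" "del2 a U = X @ Y" "U ! a = x" "U ! Suc a = y"
proof -
  obtain X Z where U: "U = X @ Z" "length X = a" by (rule split_at[of a U]) (use assms in auto)
  obtain x y Y where Z: "Z = x # y # Y" by (rule split2[of Z]) (use assms U in auto)
  show ?thesis
    by (rule that[of X x y Y]) (use U Z in \<open>auto simp: nth_append del2_append[OF refl]\<close>)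
qed

lemma distinct_del2:
  assumes "distinct U" "Suc a < length U"
  shows "distinct (del2 a U)" "U ! a \<notin> set (del2 a U)" "U ! Suc a \<notin> set (del2 a U)"
proof -
  obtain X x y Y where d: "U = X @ x # y # Y" "length X = a" "del2 a U = X @ Y" "U ! a = x" "U ! Suc a = y"
    using del2_decomp[OF assms(2)] by blast
  have dd: "distinct (X @ x # y # Y)" using assms(1) d(1) by simp
  show "distinct (del2 a U)" "U ! a \<notin> set (del2 a U)" "U ! Suc a \<notin> set (del2 a U)"
    unfolding d(3,4,5) using dd by auto
qed

lemma cinv_step:
  assumes "cinv (P, U)" "Suc a < length U" "U ! a = ST i" "U ! Suc a = ST j"
  shows "cinv (insert (i, j) P, del2 a U)"
proof -
  have dU: "distinct U" using assms(1) by (simp add: cinv_def)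
  have d: "distinct (del2 a U)" "ST i \<notin> set (del2 a U)" "ST j \<notin> set (del2 a U)"
    using distinct_del2[OF dU assms(2)] assms(3,4) by auto
  have s: "set (del2 a U) \<subseteq> set U" by (rule set_del2)
  have aT: "allT (del2 a U)" using assms(1) allT_del2 unfolding cinv_def by simp
  have "\<forall>q\<in>insert (i, j) P. ST (fst q) \<notin> set (del2 a U) \<and> ST (snd q) \<notin> set (del2 a U)"
  proof (rule ballI)
    fix q assume "q \<in> insert (i, j) P"
    then show "ST (fst q) \<notin> set (del2 a U) \<and> ST (snd q) \<notin> set (del2 a U)"
    proof
      assume "q = (i, j)" then show ?thesis using d by simp
    next
      assume "q \<in> P"
      then have "ST (fst q) \<notin> set U \<and> ST (snd q) \<notin> set U" using assms(1) unfolding cinv_def by simp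
      then show ?thesis using s by blast
    qed
  qed
  then show ?thesis using aT d(1) unfolding cinv_def by simp
qed

lemma cinv_T:
  assumes "cinv (P, U)" "a < length U"
  obtains i where "U ! a = ST i"
proof -
  have "isT (U ! a)" using assms unfolding cinv_def allT_def by simp
  then show ?thesis using that isT_ex by blast
qed

lemma cap_extract:
  assumes "cinv (P0, U0)" "cap_word v" "typed (length U0) k v" "Suc p < length U0"
    "U0 ! p = ST i" "U0 ! Suc p = ST j" "evalw (P0, U0) v = Some (P, U1)" "(i, j) \<in> P"
  shows "\<exists>v1. cap_word v1 \<and> typed (length U0 - 2) k v1 \<and>
     tl_eq (length U0) k (dlt v :: word \<Rightarrow> 'k::field) (dlt ((p, Cap) # v1)) \<and>
     evalw (insert (i, j) P0, del2 p U0) v1 = Some (P, U1)"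
  using assms
proof (induction v arbitrary: P0 U0 p i j)
  case Nil
  then have "(i, j) \<in> P0" by simp
  moreover have "ST i \<in> set U0" using Nil.prems(4,5) by (metis Suc_lessD nth_mem)
  ultimately show ?case using Nil.prems(1) unfolding cinv_def by auto
next
  case (Cons x v2)
  obtain b g where x: "x = (b, g)" by (cases x)
  then have g: "g = Cap" using Cons.prems(2) by simp
  let ?L = "length U0"
  have cv2: "cap_word v2" using Cons.prems(2) by simp
  have tb: "b + 2 \<le> ?L" "typed (?L - 2) k v2" using Cons.prems(3) x g by auto
  have b1: "Suc b < ?L" using tb by simp
  obtain x' where x': "U0 ! b = ST x'" using cinv_T[OF Cons.prems(1)] b1 by (metis Suc_lessD)
  obtain y' where y': "U0 ! Suc b = ST y'" using cinv_T[OF Cons.prems(1) b1] by metis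
  let ?U' = "del2 b U0"
  have ev2: "evalw (insert (x', y') P0, ?U') v2 = Some (P, U1)"
    using Cons.prems(7) x g b1 x' y' by simp
  have ci': "cinv (insert (x', y') P0, ?U')" by (rule cinv_step[OF Cons.prems(1) b1 x' y'])
  have lU': "length ?U' = ?L - 2" using b1 by simp
  have dU: "distinct U0" using Cons.prems(1) by (simp add: cinv_def)
  have mono: "insert (x', y') P0 \<subseteq> P \<and> (\<forall>q\<in>P - insert (x', y') P0. ST (fst q) \<in> set ?U' \<and> ST (snd q) \<in> set ?U')"
    using cap_mono[OF cv2 ev2] by blast
  have iP0: "(i, j) \<notin> P0"
  proof
    assume "(i, j) \<in> P0"
    moreover have "ST i \<in> set U0" using Cons.prems(4,5) by (metis Suc_lessD nth_mem)
    ultimately show False using Cons.prems(1) unfolding cinv_def by auto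
  qed
  have ij: "i \<noteq> j"
  proof
    assume "i = j"
    then have "U0 ! p = U0 ! Suc p" using Cons.prems(5,6) by simp
    then show False using dU Cons.prems(4) nth_eq_iff_index_eq by fastforce
  qed
  consider "b = p" | "b = Suc p" | "Suc b = p" | "b + 2 \<le> p" | "p + 2 \<le> b" by linarith
  then show ?case
  proof cases
    case 1
    then have "x' = i" "y' = j" using x' y' Cons.prems(5,6) by auto
    then show ?thesis using cv2 tb ev2 1 x g by (intro exI[of _ v2]) (auto simp: tl_eq_refl)
  next
    case 2
    then have xj: "x' = j" using x' Cons.prems(6) by simp
    have nj: "ST j \<notin> set ?U'" using distinct_del2(2)[OF dU b1] x' xj by simp
    have "(i, j) \<noteq> (x', y')" using xj ij by simp
    then have "(i, j) \<in> P - insert (x', y') P0" using Cons.prems(8) iP0 by simp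
    from bspec[OF conjunct2[OF mono] this] have "ST j \<in> set ?U'" by simp
    then show ?thesis using nj by simp
  next
    case 3
    then have yi: "y' = i" using y' Cons.prems(5) by simp
    have ni: "ST i \<notin> set ?U'" using distinct_del2(3)[OF dU b1] y' yi by simp
    have "x' \<noteq> i"
    proof
      assume "x' = i"
      then have "U0 ! b = U0 ! p" using x' Cons.prems(5) by simp
      then show False using dU Cons.prems(4) 3 nth_eq_iff_index_eq by fastforce
    qed
    then have "(i, j) \<noteq> (x', y')" by simp
    then have "(i, j) \<in> P - insert (x', y') P0" using Cons.prems(8) iP0 by simp
    from bspec[OF conjunct2[OF mono] this] have "ST i \<in> set ?U'" by simp
    then show ?thesis using ni by simp
  next
    case 4
    have p2: "Suc (p - 2) < length ?U'" using 4 Cons.prems(4) lU' by simp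
    have n1: "?U' ! (p - 2) = ST i" "?U' ! Suc (p - 2) = ST j"
    proof -
      have f: "\<not> p - 2 < b" "p - 2 < length U0 - 2" "\<not> Suc (p - 2) < b" "Suc (p - 2) < length U0 - 2"
        using 4 Cons.prems(4) by auto
      have pp: "p - 2 + 2 = p" "Suc (p - 2) + 2 = Suc p" using 4 by auto
      have "?U' ! (p - 2) = U0 ! (p - 2 + 2)" using nth_del2[OF b1, of "p - 2"] f by simp
      then show "?U' ! (p - 2) = ST i" using Cons.prems(5) unfolding pp by simp
      have "?U' ! Suc (p - 2) = U0 ! (Suc (p - 2) + 2)" using nth_del2[OF b1, of "Suc (p - 2)"] f by simp
      then show "?U' ! Suc (p - 2) = ST j" using Cons.prems(6) unfolding pp by simp
    qed
    have t2: "typed (length ?U') k v2" using tb lU' by simp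
    from Cons.IH[OF ci' cv2 t2 p2 n1 ev2 Cons.prems(8)]
    obtain v3 where v3: "cap_word v3" "typed (length ?U' - 2) k v3"
      "tl_eq (length ?U') k (dlt v2 :: word \<Rightarrow> 'k) (dlt ((p - 2, Cap) # v3))"
      "evalw (insert (i, j) (insert (x', y') P0), del2 (p - 2) ?U') v3 = Some (P, U1)" by blast
    have e1: "tl_eq ?L k (dlt ([(b, Cap)] @ v2 @ []) :: word \<Rightarrow> 'k) (dlt ([(b, Cap)] @ ((p - 2, Cap) # v3) @ []))"
      by (rule tl_eq_ctx_dlt[OF v3(3)]) (use tb lU' in auto)
    have tw: "typed ?L k ([] @ [(b, Cap), (p - 2, Cap)] @ v3)"
      using v3(2) lU' 4 Cons.prems(4) by auto
    have e2: "tl_eq ?L k (dlt ([] @ [(b, Cap), (p - 2, Cap)] @ v3) :: word \<Rightarrow> 'k) (dlt ([] @ [(p - 2 + ins Cap - outs Cap, Cap), (b, Cap)] @ v3))"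
      by (rule rel_ic) (use 4 tw in auto)
    have pp: "p - 2 + ins Cap - outs Cap = p" using 4 by simp
    have e: "tl_eq ?L k (dlt (x # v2) :: word \<Rightarrow> 'k) (dlt ((p, Cap) # (b, Cap) # v3))"
      using tl_eq_trans[OF e1[simplified] e2[unfolded pp, simplified]] x g by simp
    have dd: "del2 b (del2 p U0) = del2 (p - 2) ?U'"
    proof -
      have "del2 (p - 2) (del2 b U0) = del2 b (del2 (p - 2 + 2) U0)"
        by (rule del2_del2) (use 4 Cons.prems(4) in auto)
      moreover have "p - 2 + 2 = p" using 4 by simp
      ultimately show ?thesis by simp
    qed
    have lp: "length (del2 p U0) = ?L - 2" using Cons.prems(4) by simp
    have m1: "del2 p U0 ! b = ST x'" "del2 p U0 ! Suc b = ST y'"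
      using nth_del2[OF Cons.prems(4), of b] nth_del2[OF Cons.prems(4), of "Suc b"] x' y' 4 Cons.prems(4) by auto
    have ev: "evalw (insert (i, j) P0, del2 p U0) ((b, Cap) # v3) = Some (P, U1)"
    proof -
      have "Suc b < length (del2 p U0)" using lp 4 Cons.prems(4) by simp
      then have "evalw (insert (i, j) P0, del2 p U0) ((b, Cap) # v3) =
          evalw (insert (x', y') (insert (i, j) P0), del2 b (del2 p U0)) v3" using m1 by simp
      also have "\<dots> = Some (P, U1)" using v3(4) dd by (simp add: insert_commute)
      finally show ?thesis .
    qed
    have tv1: "typed (?L - 2) k ((b, Cap) # v3)" using v3(2) lU' 4 Cons.prems(4) by auto
    show ?thesis using v3(1) tv1 e ev by (intro exI[of _ "(b, Cap) # v3"]) auto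
  next
    case 5
    have p2: "Suc p < length ?U'" using 5 tb lU' by simp
    have n1: "?U' ! p = ST i" "?U' ! Suc p = ST j"
      using nth_del2[OF b1, of p] nth_del2[OF b1, of "Suc p"] 5 tb Cons.prems(5,6) by auto
    have t2: "typed (length ?U') k v2" using tb lU' by simp
    from Cons.IH[OF ci' cv2 t2 p2 n1 ev2 Cons.prems(8)]
    obtain v3 where v3: "cap_word v3" "typed (length ?U' - 2) k v3"
      "tl_eq (length ?U') k (dlt v2 :: word \<Rightarrow> 'k) (dlt ((p, Cap) # v3))"
      "evalw (insert (i, j) (insert (x', y') P0), del2 p ?U') v3 = Some (P, U1)" by blast
    have e1: "tl_eq ?L k (dlt ([(b, Cap)] @ v2 @ []) :: word \<Rightarrow> 'k) (dlt ([(b, Cap)] @ ((p, Cap) # v3) @ []))"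
      by (rule tl_eq_ctx_dlt[OF v3(3)]) (use tb lU' in auto)
    have tw: "typed ?L k ([] @ [(p, Cap), (b - 2, Cap)] @ v3)"
      using v3(2) lU' 5 tb by auto
    have e2: "tl_eq ?L k (dlt ([] @ [(p, Cap), (b - 2, Cap)] @ v3) :: word \<Rightarrow> 'k) (dlt ([] @ [(b - 2 + ins Cap - outs Cap, Cap), (p, Cap)] @ v3))"
      by (rule rel_ic) (use 5 tw in auto)
    have bb: "b - 2 + ins Cap - outs Cap = b" using 5 by simp
    have e: "tl_eq ?L k (dlt (x # v2) :: word \<Rightarrow> 'k) (dlt ((p, Cap) # (b - 2, Cap) # v3))"
      using tl_eq_trans[OF e1[simplified] tl_eq_sym[OF e2[unfolded bb, simplified]]] x g by simp
    have dd: "del2 (b - 2) (del2 p U0) = del2 p ?U'"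
    proof -
      have "del2 (b - 2) (del2 p U0) = del2 p (del2 (b - 2 + 2) U0)"
        by (rule del2_del2) (use 5 tb in auto)
      moreover have "b - 2 + 2 = b" using 5 by simp
      ultimately show ?thesis by simp
    qed
    have lp: "length (del2 p U0) = ?L - 2" using Cons.prems(4) by simp
    have m1: "del2 p U0 ! (b - 2) = ST x'" "del2 p U0 ! Suc (b - 2) = ST y'"
    proof -
      have f: "\<not> b - 2 < p" "b - 2 < length U0 - 2" "\<not> Suc (b - 2) < p" "Suc (b - 2) < length U0 - 2"
        using 5 tb by auto
      have bb: "b - 2 + 2 = b" "Suc (b - 2) + 2 = Suc b" using 5 by auto
      have "del2 p U0 ! (b - 2) = U0 ! (b - 2 + 2)" using nth_del2[OF Cons.prems(4), of "b - 2"] f by simp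
      then show "del2 p U0 ! (b - 2) = ST x'" using x' unfolding bb by simp
      have "del2 p U0 ! Suc (b - 2) = U0 ! (Suc (b - 2) + 2)" using nth_del2[OF Cons.prems(4), of "Suc (b - 2)"] f by simp
      then show "del2 p U0 ! Suc (b - 2) = ST y'" using y' unfolding bb by simp
    qed
    have ev: "evalw (insert (i, j) P0, del2 p U0) ((b - 2, Cap) # v3) = Some (P, U1)"
    proof -
      have "Suc (b - 2) < length (del2 p U0)" using lp 5 tb by simp
      then have "evalw (insert (i, j) P0, del2 p U0) ((b - 2, Cap) # v3) =
          evalw (insert (x', y') (insert (i, j) P0), del2 (b - 2) (del2 p U0)) v3" using m1 by simp
      also have "\<dots> = Some (P, U1)" using v3(4) dd by (simp add: insert_commute)
      finally show ?thesis .
    qed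
    have tv1: "typed (?L - 2) k ((b - 2, Cap) # v3)" using v3(2) lU' 5 tb by auto
    show ?thesis using v3(1) tv1 e ev by (intro exI[of _ "(b - 2, Cap) # v3"]) auto
  qed
qed

lemma cap_unique:
  assumes "cinv (P0, U0)" "cap_word v" "cap_word v'" "typed (length U0) k v" "typed (length U0) k v'"
    "evalw (P0, U0) v = Some (P, U1)" "evalw (P0, U0) v' = Some (P, U1')"
  shows "tl_eq (length U0) k (dlt v :: word \<Rightarrow> 'k::field) (dlt v')"
  using assms
proof (induction v arbitrary: P0 U0 v' U1')
  case Nil
  have "k = length U0" using Nil.prems(4) by simp
  then have "k = k + 2 * length v'" using cap_word_len[OF Nil.prems(3), of "length U0" k] Nil.prems(5) by (simp add: typed_def)
  then have "v' = []" by simp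
  then show ?case by (simp add: tl_eq_refl)
next
  case (Cons x v1)
  obtain p g where x: "x = (p, g)" by (cases x)
  then have g: "g = Cap" using Cons.prems(2) by simp
  let ?L = "length U0"
  have cv1: "cap_word v1" using Cons.prems(2) by simp
  have tb: "p + 2 \<le> ?L" "typed (?L - 2) k v1" using Cons.prems(4) x g by auto
  have b1: "Suc p < ?L" using tb by simp
  obtain i where i: "U0 ! p = ST i" using cinv_T[OF Cons.prems(1)] b1 by (metis Suc_lessD)
  obtain j where j: "U0 ! Suc p = ST j" using cinv_T[OF Cons.prems(1) b1] by metis
  have ev1: "evalw (insert (i, j) P0, del2 p U0) v1 = Some (P, U1)"
    using Cons.prems(6) x g b1 i j by simp
  have ci': "cinv (insert (i, j) P0, del2 p U0)" by (rule cinv_step[OF Cons.prems(1) b1 i j])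
  have "insert (i, j) P0 \<subseteq> P" using cap_mono[OF cv1 ev1] by blast
  then have ijP: "(i, j) \<in> P" by blast
  from cap_extract[OF Cons.prems(1,3,5) b1 i j Cons.prems(7) ijP]
  obtain v1' where v1': "cap_word v1'" "typed (?L - 2) k v1'"
    "tl_eq ?L k (dlt v' :: word \<Rightarrow> 'k) (dlt ((p, Cap) # v1'))"
    "evalw (insert (i, j) P0, del2 p U0) v1' = Some (P, U1')" by blast
  have lU': "length (del2 p U0) = ?L - 2" using b1 by simp
  have "tl_eq (length (del2 p U0)) k (dlt v1 :: word \<Rightarrow> 'k) (dlt v1')"
    by (rule Cons.IH[OF ci' cv1 v1'(1) _ _ ev1 v1'(4)]) (use tb v1' lU' in auto)
  then have "tl_eq ?L k (dlt ([(p, Cap)] @ v1 @ []) :: word \<Rightarrow> 'k) (dlt ([(p, Cap)] @ v1' @ []))"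
    by (rule tl_eq_ctx_dlt) (use tb lU' in auto)
  then show ?case using tl_eq_sym[OF v1'(3)] x g tl_eq_trans by fastforce
qed

lemma adm_finite: "I \<in> adm k \<Longrightarrow> finite I"
  unfolding adm_def by (auto intro: finite_subset)

lemma finite_adm: "finite (adm k)"
proof -
  have "adm k \<subseteq> Pow {1..k}" unfolding adm_def by auto
  then show ?thesis by (rule finite_subset) simp
qed

lemma empty_adm: "{} \<in> adm k"
  unfolding adm_def by simp

lemma adm_Max:
  assumes "I \<in> adm k" "I \<noteq> {}"
  shows "Max I \<in> I" "1 \<le> Max I" "Max I + 1 \<le> k" "I - {Max I} \<in> adm (k - 2)"
    "\<forall>y\<in>I - {Max I}. y < Max I"
proof -
  have fI: "finite I" using adm_finite[OF assms(1)] .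
  show M: "Max I \<in> I" using fI assms(2) by simp
  have sub: "I \<subseteq> {1..k}" "k \<notin> I" "\<forall>i\<in>I. Suc i \<notin> I" using assms(1) unfolding adm_def by auto
  show "1 \<le> Max I" using M sub by auto
  have "Max I \<le> k" "Max I \<noteq> k" using M sub by auto
  then show Mk: "Max I + 1 \<le> k" by simp
  show lt: "\<forall>y\<in>I - {Max I}. y < Max I" using fI by (auto simp: order.not_eq_order_implies_strict)
  have y2: "\<forall>y\<in>I - {Max I}. y + 2 \<le> Max I"
  proof
    fix y assume y: "y \<in> I - {Max I}"
    then have "y < Max I" using lt by auto
    moreover have "Suc y \<noteq> Max I" using y sub(3) M by auto
    ultimately show "y + 2 \<le> Max I" by simp
  qed
  show "I - {Max I} \<in> adm (k - 2)"
    unfolding adm_def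
  proof (intro CollectI conjI)
    show "I - {Max I} \<subseteq> {1..k - 2}"
    proof
      fix y assume y: "y \<in> I - {Max I}"
      have "1 \<le> y" using y sub(1) by auto
      moreover have "y + 2 \<le> Max I" using y y2 by blast
      ultimately show "y \<in> {1..k - 2}" using Mk by simp
    qed
    show "k - 2 \<notin> I - {Max I}"
    proof
      assume "k - 2 \<in> I - {Max I}"
      then have "k - 2 + 2 \<le> Max I" using y2 by blast
      then show False using Mk by simp
    qed
    show "\<forall>i\<in>I - {Max I}. Suc i \<notin> I - {Max I}" using sub(3) by auto
  qed
qed

lemma sorted_Max:
  assumes "finite I" "I \<noteq> {}"
  shows "sorted_list_of_set I = sorted_list_of_set (I - {Max I}) @ [Max I]"
proof -
  have fI: "finite (I - {Max I})" using assms by simp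
  have M: "Max I \<in> I" using assms by simp
  have lt: "\<forall>y\<in>I - {Max I}. y < Max I" using assms by (auto simp: order.not_eq_order_implies_strict)
  have c: "card I = Suc (card (I - {Max I}))" using card_Suc_Diff1[OF assms(1) M] by simp
  let ?l = "sorted_list_of_set (I - {Max I}) @ [Max I]"
  have 1: "sorted_wrt (<) ?l"
    using lt fI by (simp add: sorted_wrt_append strict_sorted_list_of_set)
  have 2: "set ?l = I" using fI M by auto
  have 3: "length ?l = card I" using c fI by simp
  show ?thesis using 1 2 3 sorted_list_of_set_unique[of I ?l] assms(1) by simp
qed

lemma capI_Max: assumes "finite I" "I \<noteq> {}" shows "capI I = (Max I - 1, Cap) # capI (I - {Max I})"
  unfolding capI_def sorted_Max[OF assms] by simp

lemma cupI_Max: assumes "finite I" "I \<noteq> {}" shows "cupI I = cupI (I - {Max I}) @ [(Max I - 1, Cup)]"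
  unfolding cupI_def sorted_Max[OF assms] by simp

lemma capI_empty[simp]: "capI {} = []" by (simp add: capI_def)
lemma cupI_empty[simp]: "cupI {} = []" by (simp add: cupI_def)

lemma cap_word_capI: "cap_word (capI I)" by (auto simp: capI_def cap_word_def)
lemma cup_word_cupI: "cup_word (cupI I)" by (auto simp: cupI_def cup_word_def)

lemma adm_typed:
  "I \<in> adm k \<Longrightarrow> 2 * card I \<le> k \<and> typed k (k - 2 * card I) (capI I) \<and> typed (k - 2 * card I) k (cupI I)"
proof (induction "card I" arbitrary: I k)
  case 0
  then have "I = {}" using adm_finite by auto
  then show ?case by simp
next
  case (Suc c)
  have fI: "finite I" using adm_finite[OF Suc.prems] .
  have ne: "I \<noteq> {}" using Suc.hyps(2) by auto
  note M = adm_Max[OF Suc.prems ne]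
  let ?J = "I - {Max I}"
  have cJ: "c = card ?J" using Suc.hyps(2) M(1) fI by simp
  from Suc.hyps(1)[OF cJ M(4)]
  have IH: "2 * card ?J \<le> k - 2" "typed (k - 2) (k - 2 - 2 * card ?J) (capI ?J)"
     "typed (k - 2 - 2 * card ?J) (k - 2) (cupI ?J)" by auto
  have cI: "card I = Suc (card ?J)" using Suc.hyps(2) cJ by simp
  have e: "k - 2 - 2 * card ?J = k - 2 * card I" using cI by simp
  have b: "2 * card I \<le> k" using IH(1) M(2,3) cI by simp
  have t1: "typed k (k - 2 * card I) (capI I)"
    unfolding capI_Max[OF fI ne] using IH(2) M(2,3) e by simp
  have t2: "typed (k - 2 * card I) k (cupI I)"
  proof -
    have "typed (k - 2) k [(Max I - 1, Cup)]" using M(2,3) by auto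
    then show ?thesis unfolding cupI_Max[OF fI ne] using IH(3) e typed_append by fastforce
  qed
  show ?case using b t1 t2 by simp
qed

lemma hat_word_typed:
  assumes "I \<in> adm k" "typed m k v" "typed k n u"
  shows "typed m n (v @ capI I @ cupI I @ u)"
  using adm_typed[OF assms(1)] assms(2,3) typed_append by meson

lemma hat_eq: "hat_vec v k u = (\<lambda>w. \<Sum>I\<in>adm k. (-1) ^ card I * dlt (v @ capI I @ cupI I @ u) w)"
  by (simp add: hat_vec_def)

lemma hat_split:
  "hat_vec v k u = (\<lambda>w. dlt (v @ u) w + (\<Sum>I\<in>adm k - {{}}. (-1) ^ card I * dlt (v @ capI I @ cupI I @ u) w))"
proof
  fix w
  show "hat_vec v k u w = dlt (v @ u) w + (\<Sum>I\<in>adm k - {{}}. (-1) ^ card I * dlt (v @ capI I @ cupI I @ u) w)"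
    unfolding hat_eq using sum.remove[OF finite_adm empty_adm, of "\<lambda>I. (-1) ^ card I * dlt (v @ capI I @ cupI I @ u) w"]
    by simp
qed

lemma hat_free:
  assumes "typed m k v" "typed k n u"
  shows "(hat_vec v k u :: word \<Rightarrow> 'k::field) \<in> free_vec m n"
proof -
  have sub: "{w. (hat_vec v k u :: word \<Rightarrow> 'k) w \<noteq> 0} \<subseteq> (\<lambda>I. v @ capI I @ cupI I @ u) ` adm k"
  proof
    fix w assume "w \<in> {w. (hat_vec v k u :: word \<Rightarrow> 'k) w \<noteq> 0}"
    then have "(\<Sum>I\<in>adm k. (-1) ^ card I * dlt (v @ capI I @ cupI I @ u) w :: 'k) \<noteq> 0" by (simp add: hat_eq)
    then obtain I where "I \<in> adm k" "(-1) ^ card I * dlt (v @ capI I @ cupI I @ u) w \<noteq> (0::'k)"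
      by (meson sum.neutral)
    then show "w \<in> (\<lambda>I. v @ capI I @ cupI I @ u) ` adm k" by (auto simp: dlt_def split: if_splits)
  qed
  have fin: "finite {w. (hat_vec v k u :: word \<Rightarrow> 'k) w \<noteq> 0}"
    using finite_subset[OF sub] finite_adm by blast
  have "\<forall>w. (hat_vec v k u :: word \<Rightarrow> 'k) w \<noteq> 0 \<longrightarrow> typed m n w"
    using sub hat_word_typed[OF _ assms] by blast
  then show ?thesis using fin unfolding free_vec_def by blast
qed

definition SpanQ :: "nat \<Rightarrow> nat \<Rightarrow> (word \<Rightarrow> 'k::field) set \<Rightarrow> (word \<Rightarrow> 'k) set" where
  "SpanQ m n B = {f. \<exists>F c. finite F \<and> F \<subseteq> B \<and> tl_eq m n f (lin_comb F c)}"

lemma lin_comb_empty: "lin_comb {} c = (\<lambda>_. 0)"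
  by (simp add: lin_comb_def)

lemma lin_comb_extend:
  assumes "finite H" "F \<subseteq> H"
  shows "lin_comb F c = lin_comb H (\<lambda>v. if v \<in> F then c v else 0)"
proof
  fix w
  show "lin_comb F c w = lin_comb H (\<lambda>v. if v \<in> F then c v else 0) w"
    unfolding lin_comb_def
    by (rule sum.mono_neutral_cong_left) (use assms in auto)
qed

lemma lin_comb_lin:
  "(\<lambda>w. lin_comb H c w + a * lin_comb H d w) = lin_comb H (\<lambda>v. c v + a * d v)"
  by (rule ext) (simp add: lin_comb_def sum.distrib sum_distrib_left algebra_simps)

lemma Q_0: "(\<lambda>_. 0) \<in> SpanQ m n B"
  unfolding SpanQ_def
  by (rule CollectI, rule exI[of _ "{}"], rule exI[of _ "\<lambda>_. 0"]) (simp add: lin_comb_empty tl_eq_refl)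

lemma Q_base: "h \<in> B \<Longrightarrow> h \<in> SpanQ m n B"
proof -
  assume h: "h \<in> B"
  have "lin_comb {h} (\<lambda>_. 1) = h" by (simp add: lin_comb_def)
  then show ?thesis unfolding SpanQ_def using h tl_eq_refl[of m n h]
    by (intro CollectI exI[of _ "{h}"] exI[of _ "\<lambda>_. 1"]) auto
qed

lemma Q_tl: assumes a: "tl_eq m n f g" and b: "g \<in> SpanQ m n B" shows "f \<in> SpanQ m n B"
proof -
  from b obtain F c where F: "finite F" "F \<subseteq> B" "tl_eq m n g (lin_comb F c)" unfolding SpanQ_def by blast
  have "tl_eq m n f (lin_comb F c)" by (rule tl_eq_trans[OF a F(3)])
  then show ?thesis unfolding SpanQ_def using F(1,2) by blast
qed

lemma Q_add:
  assumes "f \<in> SpanQ m n B" "g \<in> SpanQ m n B"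
  shows "(\<lambda>w. f w + a * g w) \<in> SpanQ m n B"
proof -
  obtain F c where F: "finite F" "F \<subseteq> B" "tl_eq m n f (lin_comb F c)" using assms(1) unfolding SpanQ_def by blast
  obtain G d where G: "finite G" "G \<subseteq> B" "tl_eq m n g (lin_comb G d)" using assms(2) unfolding SpanQ_def by blast
  let ?H = "F \<union> G"
  have e1: "lin_comb F c = lin_comb ?H (\<lambda>v. if v \<in> F then c v else 0)" by (rule lin_comb_extend) (use F G in auto)
  have e2: "lin_comb G d = lin_comb ?H (\<lambda>v. if v \<in> G then d v else 0)" by (rule lin_comb_extend) (use F G in auto)
  have "tl_eq m n (\<lambda>w. f w + a * g w) (\<lambda>w. lin_comb F c w + a * lin_comb G d w)"
    by (rule tl_eq_add[OF F(3) G(3)])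
  also have "(\<lambda>w. lin_comb F c w + a * lin_comb G d w) = lin_comb ?H (\<lambda>v. (if v \<in> F then c v else 0) + a * (if v \<in> G then d v else 0))"
    unfolding e1 e2 lin_comb_lin ..
  finally show ?thesis unfolding SpanQ_def using F G by blast
qed

lemma Q_diff:
  assumes "f \<in> SpanQ m n B" "g \<in> SpanQ m n B"
  shows "(\<lambda>w. f w - g w) \<in> SpanQ m n B"
  using Q_add[OF assms, of "-1"] by simp

lemma Q_sum:
  "finite A \<Longrightarrow> (\<And>x. x \<in> A \<Longrightarrow> g x \<in> SpanQ m n B) \<Longrightarrow> (\<lambda>w. \<Sum>x\<in>A. c x * g x w) \<in> SpanQ m n B"
proof (induction A rule: finite_induct)
  case empty
  then show ?case using Q_0 by simp
next
  case (insert x A)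
  have "(\<lambda>w. (\<Sum>x\<in>A. c x * g x w) + c x * g x w) \<in> SpanQ m n B"
    using insert by (intro Q_add) auto
  then show ?case using insert(1,2) by (simp add: add.commute)
qed

lemma capcup_Q:
  "cap_word v \<Longrightarrow> cup_word u \<Longrightarrow> typed m k v \<Longrightarrow> typed k n u \<Longrightarrow>
    (dlt (v @ u) :: word \<Rightarrow> 'k::field) \<in> SpanQ m n (hat_set m n)"
proof (induction k arbitrary: v u rule: less_induct)
  case (less k)
  show ?case
  proof (cases "tl_eq m n (dlt (v @ u)) (\<lambda>_. 0 :: 'k)")
    case True
    then show ?thesis using Q_tl[OF _ Q_0] by blast
  next
    case False
    have hB: "(hat_vec v k u :: word \<Rightarrow> 'k) \<in> hat_set m n"
      unfolding hat_set_def
    proof (intro CollectI exI conjI)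
      show "typed m n (v @ u)" using less.prems typed_append by blast
    qed (use False less.prems tl_eq_refl in auto)
    have lower: "(dlt (v @ capI I @ cupI I @ u) :: word \<Rightarrow> 'k) \<in> SpanQ m n (hat_set m n)"
      if I: "I \<in> adm k - {{}}" for I
    proof -
      have aI: "I \<in> adm k" "I \<noteq> {}" using I by auto
      note ty = adm_typed[OF aI(1)]
      have cI: "card I > 0" using aI adm_finite[OF aI(1)] by (simp add: card_gt_0_iff)
      have lt: "k - 2 * card I < k" using ty cI by simp
      have "(dlt ((v @ capI I) @ (cupI I @ u)) :: word \<Rightarrow> 'k) \<in> SpanQ m n (hat_set m n)"
        by (rule less.IH[OF lt]) (use less.prems ty typed_append cap_word_capI cup_word_cupI in auto)
      then show ?thesis by simp
    qed
    have s: "(\<lambda>w. \<Sum>I\<in>adm k - {{}}. (-1) ^ card I * dlt (v @ capI I @ cupI I @ u) w :: 'k) \<in> SpanQ m n (hat_set m n)"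
      by (rule Q_sum) (use finite_adm lower in auto)
    have hQ: "(hat_vec v k u :: word \<Rightarrow> 'k) \<in> SpanQ m n (hat_set m n)" by (rule Q_base[OF hB])
    have "(\<lambda>w. hat_vec v k u w - (\<Sum>I\<in>adm k - {{}}. (-1) ^ card I * dlt (v @ capI I @ cupI I @ u) w) :: 'k) \<in> SpanQ m n (hat_set m n)"
      by (rule Q_diff[OF hQ s])
    moreover have "(\<lambda>w. hat_vec v k u w - (\<Sum>I\<in>adm k - {{}}. (-1) ^ card I * dlt (v @ capI I @ cupI I @ u) w) :: 'k) = (dlt (v @ u) :: word \<Rightarrow> 'k)"
      unfolding hat_split by simp
    ultimately show ?thesis by simp
  qed
qed

lemma word_Q: "typed m n w \<Longrightarrow> (dlt w :: word \<Rightarrow> 'k::field) \<in> SpanQ m n (hat_set m n)"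
proof -
  assume "typed m n w"
  from word_normal[OF this] show ?thesis
  proof
    assume "tl_eq m n (dlt w) (\<lambda>_. 0 :: 'k)"
    then show ?thesis using Q_tl[OF _ Q_0] by blast
  next
    assume "\<exists>v j u. cap_word v \<and> cup_word u \<and> typed m j v \<and> typed j n u \<and> tl_eq m n (dlt w :: word \<Rightarrow> 'k) (dlt (v @ u))"
    then obtain v j u where "cap_word v" "cup_word u" "typed m j v" "typed j n u" "tl_eq m n (dlt w :: word \<Rightarrow> 'k) (dlt (v @ u))"
      by blast
    then show ?thesis using Q_tl[OF _ capcup_Q] by blast
  qed
qed

lemma free_Q: "f \<in> free_vec m n \<Longrightarrow> (f :: word \<Rightarrow> 'k::field) \<in> SpanQ m n (hat_set m n)"
proof -
  assume f: "f \<in> free_vec m n"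
  let ?S = "{w. f w \<noteq> 0}"
  have fin: "finite ?S" and ty: "\<And>w. w \<in> ?S \<Longrightarrow> typed m n w" using f unfolding free_vec_def by auto
  have "(\<lambda>w. \<Sum>x\<in>?S. f x * dlt x w) \<in> SpanQ m n (hat_set m n)"
    by (rule Q_sum[OF fin]) (use ty word_Q in auto)
  moreover have "(\<lambda>w. \<Sum>x\<in>?S. f x * dlt x w) = f"
  proof
    fix w
    show "(\<Sum>x\<in>?S. f x * dlt x w) = f w"
    proof (cases "w \<in> ?S")
      case True
      have "(\<Sum>x\<in>?S. f x * dlt x w) = (\<Sum>x\<in>?S. if x = w then f w else 0)"
        by (rule sum.cong) (auto simp: dlt_def)
      also have "\<dots> = f w" using True fin by simp
      finally show ?thesis .
    next
      case False
      have "(\<Sum>x\<in>?S. f x * dlt x w) = 0" by (rule sum.neutral) (use False in \<open>auto simp: dlt_def\<close>)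
      then show ?thesis using False by simp
    qed
  qed
  ultimately show ?thesis by simp
qed

lemma PhiD_dsum:
  "finite A \<Longrightarrow> finite {w. (\<Sum>i\<in>A. c i * dlt (x i) w) \<noteq> (0::'k::field)} \<and>
     PhiD m D (\<lambda>w. \<Sum>i\<in>A. c i * dlt (x i) w :: 'k) = (\<Sum>i\<in>A. c i * (if ev m (x i) = Some D then 1 else 0))"
proof (induction A rule: finite_induct)
  case empty
  then show ?case by (simp add: PhiD_zero)
next
  case (insert j A)
  let ?f = "\<lambda>w. \<Sum>i\<in>A. c i * dlt (x i) w :: 'k"
  have fin: "finite {w. ?f w + c j * dlt (x j) w \<noteq> 0}"
    by (rule finite_supp_lin) (use insert finite_supp_dlt in auto)
  have "PhiD m D (\<lambda>w. ?f w + c j * dlt (x j) w) = PhiD m D ?f + c j * PhiD m D (dlt (x j) :: word \<Rightarrow> 'k)"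
    by (rule PhiD_lin) (use insert finite_supp_dlt in auto)
  moreover have "(\<lambda>w. \<Sum>i\<in>insert j A. c i * dlt (x i) w) = (\<lambda>w. ?f w + c j * dlt (x j) w)"
    using insert(1,2) by (simp add: add.commute)
  ultimately show ?case using insert fin by (simp add: PhiD_dlt add.commute)
qed

lemma PhiD_lincomb:
  "finite F \<Longrightarrow> (\<forall>h\<in>F. finite {w. h w \<noteq> 0}) \<Longrightarrow>
    finite {w. lin_comb F c w \<noteq> (0::'k::field)} \<and> PhiD m D (lin_comb F c) = (\<Sum>h\<in>F. c h * PhiD m D h)"
proof (induction F rule: finite_induct)
  case empty
  then show ?case by (simp add: lin_comb_empty PhiD_zero)
next
  case (insert x F)
  have fx: "finite {w. x w \<noteq> 0}" using insert by simp
  have IH: "finite {w. lin_comb F c w \<noteq> 0}" "PhiD m D (lin_comb F c) = (\<Sum>h\<in>F. c h * PhiD m D h)"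
    using insert by auto
  have e: "lin_comb (insert x F) c = (\<lambda>w. lin_comb F c w + c x * x w)" by (rule lin_comb_insert[OF insert(1,2)])
  show ?case unfolding e using finite_supp_lin[OF IH(1) fx] PhiD_lin[OF IH(1) fx] IH(2) insert(1,2)
    by (simp add: add.commute)
qed

lemma PhiD_hat:
  assumes "cap_word v" "cup_word u" "typed m k v" "typed k n u" "k \<le> thr D"
  shows "PhiD m D (hat_vec v k u :: word \<Rightarrow> 'k::field) = (if ev m (v @ u) = Some D then 1 else 0)"
proof -
  let ?x = "\<lambda>I. v @ capI I @ cupI I @ u"
  let ?c = "\<lambda>I. (-1) ^ card I :: 'k"
  have hs: "hat_vec v k u = (\<lambda>w. dlt (v @ u) w + 1 * (\<Sum>I\<in>adm k - {{}}. ?c I * dlt (?x I) w))"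
    unfolding hat_split by simp
  have fa: "finite (adm k - {{}})" using finite_adm by simp
  note ds = PhiD_dsum[OF fa, of ?c ?x m D]
  have z: "(if ev m (?x I) = Some D then 1 else 0) = (0::'k)" if I: "I \<in> adm k - {{}}" for I
  proof -
    have aI: "I \<in> adm k" "I \<noteq> {}" using I by auto
    note ty = adm_typed[OF aI(1)]
    have cI: "card I > 0" using aI adm_finite[OF aI(1)] by (simp add: card_gt_0_iff)
    obtain D' where D': "ev m ((v @ capI I) @ (cupI I @ u)) = Some D'" "thr D' = k - 2 * card I"
      using thr_capcup[of "v @ capI I" "cupI I @ u" m "k - 2 * card I" n]
        assms ty typed_append cap_word_capI cup_word_cupI by fastforce
    have "2 * card I \<le> k" using ty by simp
    then have "thr D' < thr D" using D'(2) cI assms(5) by linarith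
    then have "ev m (?x I) \<noteq> Some D" using D'(1) by auto
    then show ?thesis by simp
  qed
  have "PhiD m D (hat_vec v k u :: word \<Rightarrow> 'k) = PhiD m D (dlt (v @ u) :: word \<Rightarrow> 'k) + 1 * PhiD m D (\<lambda>w. \<Sum>I\<in>adm k - {{}}. ?c I * dlt (?x I) w)"
    unfolding hs by (rule PhiD_lin) (use finite_supp_dlt ds in auto)
  also have "PhiD m D (\<lambda>w. \<Sum>I\<in>adm k - {{}}. ?c I * dlt (?x I) w) = 0"
    using ds z by simp
  finally show ?thesis by (simp add: PhiD_dlt)
qed

lemma cinv_init: "cinv ({}, map ST [0..<m])"
  unfolding cinv_def allT_def by (auto simp: distinct_map inj_on_def)

lemma hat_cong:
  assumes "tl_eq m k (dlt v :: word \<Rightarrow> 'k::field) (dlt v')" "tl_eq k n (dlt u :: word \<Rightarrow> 'k) (dlt u')"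
    "typed m k v'" "typed k n u"
  shows "tl_eq m n (hat_vec v k u :: word \<Rightarrow> 'k) (hat_vec v' k u')"
  unfolding hat_eq
proof (rule tl_eq_sum[OF finite_adm])
  fix I assume I: "I \<in> adm k"
  note ty = adm_typed[OF I]
  have tX: "typed k k (capI I @ cupI I)" using ty typed_append by blast
  have e1: "tl_eq m n (dlt ([] @ v @ (capI I @ cupI I @ u)) :: word \<Rightarrow> 'k) (dlt ([] @ v' @ (capI I @ cupI I @ u)))"
  proof (rule tl_eq_ctx_dlt[OF assms(1)])
    have "typed k n ((capI I @ cupI I) @ u)" by (rule typed_append[OF tX assms(4)])
    then show "typed k n (capI I @ cupI I @ u)" by simp
  qed simp
  have e2: "tl_eq m n (dlt ((v' @ capI I @ cupI I) @ u @ []) :: word \<Rightarrow> 'k) (dlt ((v' @ capI I @ cupI I) @ u' @ []))"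
    by (rule tl_eq_ctx_dlt[OF assms(2)]) (use tX assms(3) typed_append in \<open>auto\<close>)
  have "tl_eq m n (dlt (v @ capI I @ cupI I @ u) :: word \<Rightarrow> 'k) (dlt (v' @ capI I @ cupI I @ u'))"
    using tl_eq_trans[OF e1[simplified] e2[simplified]] .
  then show "tl_eq m n (\<lambda>w. (-1) ^ card I * dlt (v @ capI I @ cupI I @ u) w :: 'k)
      (\<lambda>w. (-1) ^ card I * dlt (v' @ capI I @ cupI I @ u') w)"
    by (rule tl_eq_smult)
qed

lemma lead_unique:
  assumes "cap_word v" "cup_word u" "typed m k v" "typed k n u"
    "cap_word v'" "cup_word u'" "typed m k' v'" "typed k' n u'"
    "ev m (v @ u) = ev m (v' @ u')"
  shows "tl_eq m n (hat_vec v k u :: word \<Rightarrow> 'k::field) (hat_vec v' k' u')"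
proof -
  obtain P U where PU: "evalw ({}, map ST [0..<m]) v = Some (P, U)" "allT U" "length U = k"
     "ev m (v @ u) = Some (P, runcup U u)"
    using ev_capcup[OF assms(1-4)] by blast
  obtain P' U' where PU': "evalw ({}, map ST [0..<m]) v' = Some (P', U')" "allT U'" "length U' = k'"
     "ev m (v' @ u') = Some (P', runcup U' u')"
    using ev_capcup[OF assms(5-8)] by blast
  have PP: "P = P'" and RR: "runcup U u = runcup U' u'" using PU(4) PU'(4) assms(9) by auto
  have "U = U'" using arg_cong[OF RR, of "filter isT"] PU(2) PU'(2) by (simp add: filter_runcup allT_filter)
  then have kk: "k = k'" using PU(3) PU'(3) by simp
  have lm: "length (map ST [0..<m]) = m" by simp
  have t1: "typed (length (map ST [0..<m])) k v" using assms(3) by simp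
  have t2: "typed (length (map ST [0..<m])) k v'" using assms(7) kk by simp
  have e': "evalw ({}, map ST [0..<m]) v' = Some (P, U')" using PU'(1) PP by simp
  have c1: "tl_eq m k (dlt v :: word \<Rightarrow> 'k) (dlt v')"
    using cap_unique[OF cinv_init assms(1,5) t1 t2 PU(1) e'] by simp
  have c2: "tl_eq k n (dlt u :: word \<Rightarrow> 'k) (dlt u')"
  proof -
    have t3: "typed (length U) n u" "typed (length U) n u'" using assms(4,8) PU(3) kk by auto
    have "runcup U u = runcup U u'" using RR \<open>U = U'\<close> by simp
    from cup_unique[OF assms(2,6) t3 PU(2) this] show ?thesis using PU(3) by simp
  qed
  show ?thesis using hat_cong[OF c1 c2] assms(7,4) kk by simp
qed

lemma hat_set_rep:
  assumes "h \<in> (hat_set m n :: (word \<Rightarrow> 'k::field) set)"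
  shows "\<exists>r. h = hat_vec (fst r) (fst (snd r)) (snd (snd r)) \<and> cap_word (fst r) \<and> cup_word (snd (snd r)) \<and>
     typed m (fst (snd r)) (fst r) \<and> typed (fst (snd r)) n (snd (snd r))"
proof -
  from assms obtain w v k u where "h = hat_vec v k u" "cap_word v" "cup_word u" "typed m k v" "typed k n u"
    unfolding hat_set_def by blast
  then show ?thesis by (intro exI[of _ "(v, k, u)"]) simp
qed

lemma hat_set_free: "(hat_set m n :: (word \<Rightarrow> 'k::field) set) \<subseteq> free_vec m n"
proof
  fix h assume "h \<in> (hat_set m n :: (word \<Rightarrow> 'k::field) set)"
  from hat_set_rep[OF this] obtain r where r: "h = hat_vec (fst r) (fst (snd r)) (snd (snd r))"
    "typed m (fst (snd r)) (fst r)" "typed (fst (snd r)) n (snd (snd r))" by blast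
  show "h \<in> free_vec m n" unfolding r(1) by (rule hat_free[OF r(2,3)])
qed

lemma indep:
  assumes "finite F" "F \<subseteq> (hat_set m n :: (word \<Rightarrow> 'k::field) set)"
    "\<forall>h\<in>F. \<forall>h'\<in>F. h \<noteq> h' \<longrightarrow> \<not> tl_eq m n h h'" "lin_comb F c \<in> tl_ideal m n"
  shows "\<forall>h\<in>F. c h = 0"
proof (rule ccontr)
  assume nz: "\<not> (\<forall>h\<in>F. c h = 0)"
  have "\<forall>h\<in>F. \<exists>r. h = hat_vec (fst r) (fst (snd r)) (snd (snd r)) \<and> cap_word (fst r) \<and> cup_word (snd (snd r)) \<and>
     typed m (fst (snd r)) (fst r) \<and> typed (fst (snd r)) n (snd (snd r))"
    using hat_set_rep assms(2) by blast
  then obtain R where R: "\<forall>h\<in>F. h = hat_vec (fst (R h)) (fst (snd (R h))) (snd (snd (R h))) \<and> cap_word (fst (R h)) \<and>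
     cup_word (snd (snd (R h))) \<and> typed m (fst (snd (R h))) (fst (R h)) \<and> typed (fst (snd (R h))) n (snd (snd (R h)))"
    by (rule bchoice[elim_format]) blast
  define RV where "RV h = fst (R h)" for h
  define RK where "RK h = fst (snd (R h))" for h
  define RU where "RU h = snd (snd (R h))" for h
  have Rh: "h = hat_vec (RV h) (RK h) (RU h)" "cap_word (RV h)" "cup_word (RU h)" "typed m (RK h) (RV h)" "typed (RK h) n (RU h)"
    if "h \<in> F" for h
    using R that unfolding RV_def RK_def RU_def by auto
  let ?S = "{h\<in>F. c h \<noteq> 0}"
  have fS: "finite ?S" using assms(1) by simp
  have neS: "?S \<noteq> {}" using nz by auto
  have "Max (RK ` ?S) \<in> RK ` ?S" using fS neS by simp
  then obtain hs where hs: "hs \<in> ?S" "RK hs = Max (RK ` ?S)" by auto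
  have maxK: "RK h \<le> RK hs" if "h \<in> ?S" for h using hs(2) fS that by simp
  have hsF: "hs \<in> F" and chs: "c hs \<noteq> 0" using hs(1) by auto
  obtain D where D: "ev m (RV hs @ RU hs) = Some D" "thr D = RK hs"
    using thr_capcup[OF Rh(2,3,4,5)[OF hsF]] by blast
  have finh: "\<forall>h\<in>F. finite {w. h w \<noteq> 0}"
    using assms(2) hat_set_free unfolding free_vec_def by blast
  have z1: "PhiD m D (lin_comb F c) = 0" using ideal_Phi[OF assms(4)] by blast
  have z2: "PhiD m D (lin_comb F c) = (\<Sum>h\<in>F. c h * PhiD m D h)"
    using PhiD_lincomb[OF assms(1) finh] by blast
  have terms: "c h * PhiD m D h = (if h = hs then c hs else 0)" if hF: "h \<in> F" for h
  proof (cases "c h = 0")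
    case True
    then have "h \<noteq> hs" using chs by auto
    then show ?thesis using True by simp
  next
    case False
    then have hS: "h \<in> ?S" using hF by simp
    have le: "RK h \<le> thr D" using maxK[OF hS] D(2) by simp
    have e1: "hat_vec (RV h) (RK h) (RU h) = h" using Rh(1)[OF hF] by (rule sym)
    have P: "PhiD m D h = (if ev m (RV h @ RU h) = Some D then 1 else 0)"
      using PhiD_hat[where 'k='k, OF Rh(2,3,4,5)[OF hF] le, unfolded e1] .
    show ?thesis
    proof (cases "h = hs")
      case True
      then show ?thesis using P D(1) by simp
    next
      case hne: False
      have "ev m (RV h @ RU h) \<noteq> Some D"
      proof
        assume "ev m (RV h @ RU h) = Some D"
        then have evq: "ev m (RV h @ RU h) = ev m (RV hs @ RU hs)" using D(1) by simp
        have e2: "hat_vec (RV hs) (RK hs) (RU hs) = hs" using Rh(1)[OF hsF] by (rule sym)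
        from lead_unique[OF Rh(2,3,4,5)[OF hF] Rh(2,3,4,5)[OF hsF] evq, where 'k='k]
        have "tl_eq m n (hat_vec (RV h) (RK h) (RU h) :: word \<Rightarrow> 'k) (hat_vec (RV hs) (RK hs) (RU hs))" .
        then have "tl_eq m n h hs" unfolding e1 e2 .
        then show False using assms(3) hF hsF hne by blast
      qed
      then show ?thesis using P hne by simp
    qed
  qed
  have "(\<Sum>h\<in>F. c h * PhiD m D h) = (\<Sum>h\<in>F. if h = hs then c hs else 0)"
    by (rule sum.cong) (use terms in auto)
  also have "\<dots> = c hs" using hsF assms(1) by simp
  finally show False using chs z1 z2 by simp
qed

theorem mainTheorem9:
  fixes m n :: nat
  shows "basis_of_hom m n (hat_set m n :: (word \<Rightarrow> 'k::field) set)"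
  unfolding basis_of_hom_def
proof (intro conjI)
  show "(hat_set m n :: (word \<Rightarrow> 'k::field) set) \<subseteq> free_vec m n" by (rule hat_set_free)
  show "\<forall>f\<in>free_vec m n. \<exists>F c. finite F \<and> F \<subseteq> (hat_set m n :: (word \<Rightarrow> 'k::field) set) \<and> tl_eq m n f (lin_comb F c)"
    using free_Q unfolding SpanQ_def by blast
  show "\<forall>F c. finite F \<and> F \<subseteq> (hat_set m n :: (word \<Rightarrow> 'k::field) set) \<and> (\<forall>h\<in>F. \<forall>h'\<in>F. h \<noteq> h' \<longrightarrow> \<not> tl_eq m n h h') \<and>
        lin_comb F c \<in> tl_ideal m n \<longrightarrow> (\<forall>h\<in>F. c h = 0)"
    using indep by blast
qed

end
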